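(* Consider the gossip dynamics with stubborn agents and block communication probabilities described in the context, and assume: $0<n_{r1}\le n_1$, $0<n_{r2}\le n_2$; $w_s,w_d>0$, $w_s\ne w_d$, $w_s(n_1^2+n_2^2)+2w_dn_1n_2=1$; the stubborn initial vector $\mathbf{x}^s=[(\mathbf{x}^{s1})^T\ (\mathbf{x}^{s2})^T]^T$ is fixed; $n_{s1},n_{s2}>0$ and $\frac1{n_{s1}}\mathbf{1}^T\mathbf{x}^{s1}\neq\frac1{n_{s2}}\mathbf{1}^T\mathbf{x}^{s2}$; and for every stubborn agent $i$ a regular agent $j_i$ in the same community as $i$ is known. Run the algorithm described in the context. Then: (i) the community detection part converges in finite time: almost surely there is a finite (random) time $T$ and a permutation $\pi$ of $\{1,2\}$ such that $\hat{\mathcal{C}}(i,t)=\pi(\mathcal{C}(i))$ for all $i\in\mathcal{V}$ and all $t\ge T$, where $\mathcal{C}(i)=k$ iff $i\in\mathcal{V}_k$; (ii) the parameter estimation part converges almost surely: $\mathbb{P}\{\lim_{t\to\infty}(\hat w_s(t),\hat w_d(t))=(w_s,w_d)\}=1$.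
   Context: Model: agents $\mathcal{V}=\{1,\dots,n\}$, $n=n_1+n_2$, in two communities $\mathcal{V}_1=\{1,\dots,n_1\}$, $\mathcal{V}_2=\{n_1+1,\dots,n\}$ (the community structure and $n_1,n_2$ are unknown to the algorithm; $n$ is known). Community $k$ has $n_{rk}$ regular agents $\mathcal{V}_{rk}$ and $n_{sk}=n_k-n_{rk}$ stubborn agents $\mathcal{V}_{sk}$; $\mathcal{V}_r=\mathcal{V}_{r1}\cup\mathcal{V}_{r2}$ and $\mathcal{V}_s=\mathcal{V}_{s1}\cup\mathcal{V}_{s2}$ are known. Let $w_{ij}=w_s$ if $i,j$ are in the same community and $w_d$ otherwise. For $i,j\in\mathcal{V}$: $R^{ij}=I-\frac12(\mathbf{e}_i-\mathbf{e}_j)(\mathbf{e}_i-\mathbf{e}_j)^T$ if both regular; $R^{ij}=I-\frac12\mathbf{e}_i(\mathbf{e}_i-\mathbf{e}_j)^T$ if $i$ regular, $j$ stubborn; $R^{ij}=I-\frac12\mathbf{e}_j(\mathbf{e}_j-\mathbf{e}_i)^T$ if $i$ stubborn, $j$ regular; $R^{ij}=I$ if both stubborn. At each $t\in\mathbb{N}$, independently, an ordered pair $(i,j)$ is drawn with probability $w_{ij}$ and $x(t+1)=R^{ij}x(t)$, from a fixed $x(0)$; stubborn states stay constant, $x^s(t)\equiv\mathbf{x}^s$; $x^r(t)$ denotes the vector of regular agents' states. Algorithm (input: the trajectory $x^r(t)$, $\mathbf{x}^s$, and the map $i\mapsto j_i$): initialize $\hat{\mathcal{C}}(i,0),\hat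 w_s(0),\hat w_d(0)$ arbitrarily and $s^r(0)=x^r(0)$. For $t=1,2,\dots$: $s^r(t)=\frac{t}{t+1}s^r(t-1)+\frac1{t+1}x^r(t)$ and $\bar s^r(t)=\frac1{|\mathcal{V}_r|}\mathbf{1}^Ts^r(t)$. Community detection: $\hat{\mathcal{C}}(i,t)=2-\mathbb{I}_{[s^r_i(t)>\bar s^r(t)]}$ for $i\in\mathcal{V}_r$, and $\hat{\mathcal{C}}(i,t)=\hat{\mathcal{C}}(j_i,t)$ for $i\in\mathcal{V}_s$. Let $\hat n_k(t)=|\{i\in\mathcal{V}:\hat{\mathcal{C}}(i,t)=k\}|$, $\hat{\mathcal{V}}_{rk}(t)=\{i\in\mathcal{V}_r:\hat{\mathcal{C}}(i,t)=k\}$, $\hat{\mathcal{V}}_{sk}(t)=\{i\in\mathcal{V}_s:\hat{\mathcal{C}}(i,t)=k\}$, $\beta_1(t)=\frac{|\hat{\mathcal{V}}_{s1}(t)|}{|\hat{\mathcal{V}}_{r1}(t)|}\sum_{i\in\hat{\mathcal{V}}_{r1}(t)}s^r_i(t)-\sum_{i\in\hat{\mathcal{V}}_{s1}(t)}x_i(t)$, $\beta_2(t)=\frac{\hat n_2(t)}{|\hat{\mathcal{V}}_{r1}(t)|}\sum_{i\in\hat{\mathcal{V}}_{r1}(t)}s^r_i(t)-\sum_{i\in\hat{\mathcal{V}}_{r2}(t)}s^r_i(t)-\sum_{i\in\hat{\mathcal{V}}_{s2}(t)}x_i(t)$, $g(t)=\beta_1(t)-\frac{\hat n_1^2(t)+\hat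 n_2^2(t)}{2\hat n_1(t)\hat n_2(t)}\beta_2(t)$. Parameter estimation: $\tilde w_s(t)=\hat w_s(t-1)-\frac1t\,\mathrm{sgn}(g(t))\big(g(t)\hat w_s(t-1)+\frac{\beta_2(t)}{2\hat n_1(t)\hat n_2(t)}\big)$; $\hat w_s(t)=\tilde w_s(t)$ if $|\tilde w_s(t)|<2$ and $\hat w_s(t)=\frac12$ otherwise; $\hat w_d(t)=\frac{1-(\hat n_1^2(t)+\hat n_2^2(t))\hat w_s(t)}{2\hat n_1(t)\hat n_2(t)}$. *)

theory Defs
  imports "HOL-Probability.Probability" "HOL-Combinatorics.Permutations"
begin

(* Agents are 1..n, n = n1 + n2; V1 = {1..n1}, V2 = {n1+1..n1+n2}.
   State vectors are functions nat => real (only indices 1..n matter). *)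

definition comm :: "nat \<Rightarrow> nat \<Rightarrow> nat" where
  "comm n1 i = (if i \<le> n1 then 1 else 2)"

definition wgt :: "nat \<Rightarrow> real \<Rightarrow> real \<Rightarrow> nat \<Rightarrow> nat \<Rightarrow> real" where
  "wgt n1 ws wd i j = (if comm n1 i = comm n1 j then ws else wd)"

definition evec :: "nat \<Rightarrow> nat \<Rightarrow> real" where
  "evec i k = (if k = i then 1 else 0)"

definition gossip_step :: "nat set \<Rightarrow> nat \<Rightarrow> nat \<Rightarrow> (nat \<Rightarrow> real) \<Rightarrow> (nat \<Rightarrow> real)" where
  "gossip_step S i j x = (\<lambda>k.
     if i \<notin> S \<and> j \<notin> S then x k - 1/2 * (evec i k - evec j k) * (x i - x j)
     else if i \<notin> S \<and> j \<in> S then x k - 1/2 * evec i k * (x i - x j)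
     else if i \<in> S \<and> j \<notin> S then x k - 1/2 * evec j k * (x j - x i)
     else x k)"

primrec traj :: "nat set \<Rightarrow> (nat \<Rightarrow> nat \<times> nat) \<Rightarrow> (nat \<Rightarrow> real) \<Rightarrow> nat \<Rightarrow> (nat \<Rightarrow> real)" where
  "traj S I x0 0 = x0"
| "traj S I x0 (Suc t) = gossip_step S (fst (I t)) (snd (I t)) (traj S I x0 t)"

definition Vreg :: "nat \<Rightarrow> nat set \<Rightarrow> nat set" where
  "Vreg n S = {1..n} - S"

(* running averages s^r(t) (computed for all indices; only regular ones are used) *)
primrec sr :: "(nat \<Rightarrow> nat \<Rightarrow> real) \<Rightarrow> nat \<Rightarrow> nat \<Rightarrow> real" where
  "sr X 0 = X 0"
| "sr X (Suc t) = (\<lambda>i. real (Suc t) / real (Suc t + 1) * sr X t i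
                        + 1 / real (Suc t + 1) * X (Suc t) i)"

definition sbar :: "nat \<Rightarrow> nat set \<Rightarrow> (nat \<Rightarrow> nat \<Rightarrow> real) \<Rightarrow> nat \<Rightarrow> real" where
  "sbar n S X t = (\<Sum>i\<in>Vreg n S. sr X t i) / real (card (Vreg n S))"

definition Chat :: "nat \<Rightarrow> nat set \<Rightarrow> (nat \<Rightarrow> nat) \<Rightarrow> (nat \<Rightarrow> nat) \<Rightarrow> (nat \<Rightarrow> nat \<Rightarrow> real)
                     \<Rightarrow> nat \<Rightarrow> nat \<Rightarrow> nat" where
  "Chat n S j C0 X t i =
     (if t = 0 then C0 i
      else if i \<in> S then (if sr X t (j i) > sbar n S X t then 1 else 2)
      else (if sr X t i > sbar n S X t then 1 else 2))"

definition nhat :: "nat \<Rightarrow> nat set \<Rightarrow> (nat \<Rightarrow> nat) \<Rightarrow> (nat \<Rightarrow> nat) \<Rightarrow> (nat \<Rightarrow> nat \<Rightarrow> real)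
                     \<Rightarrow> nat \<Rightarrow> nat \<Rightarrow> real" where
  "nhat n S j C0 X t k = real (card {i\<in>{1..n}. Chat n S j C0 X t i = k})"

definition hVr :: "nat \<Rightarrow> nat set \<Rightarrow> (nat \<Rightarrow> nat) \<Rightarrow> (nat \<Rightarrow> nat) \<Rightarrow> (nat \<Rightarrow> nat \<Rightarrow> real)
                     \<Rightarrow> nat \<Rightarrow> nat \<Rightarrow> nat set" where
  "hVr n S j C0 X t k = {i\<in>Vreg n S. Chat n S j C0 X t i = k}"

definition hVs :: "nat \<Rightarrow> nat set \<Rightarrow> (nat \<Rightarrow> nat) \<Rightarrow> (nat \<Rightarrow> nat) \<Rightarrow> (nat \<Rightarrow> nat \<Rightarrow> real)
                     \<Rightarrow> nat \<Rightarrow> nat \<Rightarrow> nat set" where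
  "hVs n S j C0 X t k = {i\<in>S. Chat n S j C0 X t i = k}"

definition beta1 :: "nat \<Rightarrow> nat set \<Rightarrow> (nat \<Rightarrow> nat) \<Rightarrow> (nat \<Rightarrow> nat) \<Rightarrow> (nat \<Rightarrow> nat \<Rightarrow> real)
                     \<Rightarrow> nat \<Rightarrow> real" where
  "beta1 n S j C0 X t =
     real (card (hVs n S j C0 X t 1)) / real (card (hVr n S j C0 X t 1))
       * (\<Sum>i\<in>hVr n S j C0 X t 1. sr X t i)
     - (\<Sum>i\<in>hVs n S j C0 X t 1. X t i)"

definition beta2 :: "nat \<Rightarrow> nat set \<Rightarrow> (nat \<Rightarrow> nat) \<Rightarrow> (nat \<Rightarrow> nat) \<Rightarrow> (nat \<Rightarrow> nat \<Rightarrow> real)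
                     \<Rightarrow> nat \<Rightarrow> real" where
  "beta2 n S j C0 X t =
     nhat n S j C0 X t 2 / real (card (hVr n S j C0 X t 1))
       * (\<Sum>i\<in>hVr n S j C0 X t 1. sr X t i)
     - (\<Sum>i\<in>hVr n S j C0 X t 2. sr X t i)
     - (\<Sum>i\<in>hVs n S j C0 X t 2. X t i)"

definition gfun :: "nat \<Rightarrow> nat set \<Rightarrow> (nat \<Rightarrow> nat) \<Rightarrow> (nat \<Rightarrow> nat) \<Rightarrow> (nat \<Rightarrow> nat \<Rightarrow> real)
                     \<Rightarrow> nat \<Rightarrow> real" where
  "gfun n S j C0 X t =
     beta1 n S j C0 X t
     - ((nhat n S j C0 X t 1)\<^sup>2 + (nhat n S j C0 X t 2)\<^sup>2)
         / (2 * nhat n S j C0 X t 1 * nhat n S j C0 X t 2) * beta2 n S j C0 X t"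

primrec ws_hat :: "nat \<Rightarrow> nat set \<Rightarrow> (nat \<Rightarrow> nat) \<Rightarrow> (nat \<Rightarrow> nat) \<Rightarrow> real \<Rightarrow> (nat \<Rightarrow> nat \<Rightarrow> real)
                     \<Rightarrow> nat \<Rightarrow> real" where
  "ws_hat n S j C0 ws0 X 0 = ws0"
| "ws_hat n S j C0 ws0 X (Suc t) =
     (let w = ws_hat n S j C0 ws0 X t;
          g = gfun n S j C0 X (Suc t);
          wt = w - 1 / real (Suc t) * sgn g
                 * (g * w + beta2 n S j C0 X (Suc t)
                      / (2 * nhat n S j C0 X (Suc t) 1 * nhat n S j C0 X (Suc t) 2))
      in if \<bar>wt\<bar> < 2 then wt else 1/2)"

definition wd_hat :: "nat \<Rightarrow> nat set \<Rightarrow> (nat \<Rightarrow> nat) \<Rightarrow> (nat \<Rightarrow> nat) \<Rightarrow> real \<Rightarrow> real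
                     \<Rightarrow> (nat \<Rightarrow> nat \<Rightarrow> real) \<Rightarrow> nat \<Rightarrow> real" where
  "wd_hat n S j C0 ws0 wd0 X t =
     (if t = 0 then wd0
      else (1 - ((nhat n S j C0 X t 1)\<^sup>2 + (nhat n S j C0 X t 2)\<^sup>2) * ws_hat n S j C0 ws0 X t)
           / (2 * nhat n S j C0 X t 1 * nhat n S j C0 X t 2))"

end

theory Submission
  imports Defs
begin


lemma sum_split_n:
  "(\<Sum>j\<in>{1..n1+n2::nat}. f j) = (\<Sum>j\<in>{1..n1}. f j) + (\<Sum>j\<in>{n1+1..n1+n2}. f j)"
proof -
  have "{1..n1+n2} = {1..n1} \<union> {n1+1..n1+n2}" by (auto simp: not_le)
  then show ?thesis by (simp add: sum.union_disjoint)
qed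

lemma traj_prefix:
  "(\<And>s. s < t \<Longrightarrow> p s = q s) \<Longrightarrow> traj S p x0 t = traj S q x0 t"
  by (induction t) auto

lemma gossip_cases:
  "gossip_step S a b x k = x k \<or> gossip_step S a b x k = (x k + x a)/2 \<or> gossip_step S a b x k = (x k + x b)/2"
  unfolding gossip_step_def evec_def by (auto simp: field_simps)

lemma gossip_stub: "k \<in> S \<Longrightarrow> gossip_step S a b x k = x k"
  unfolding gossip_step_def evec_def by auto

lemma gossip_reg: "i \<notin> S \<Longrightarrow> gossip_step S a b x i - x i =
   (if a = i then (x b - x i)/2 else 0) + (if b = i then (x a - x i)/2 else 0)"
  unfolding gossip_step_def evec_def by (auto simp: field_simps)

lemma traj_stub: "k \<in> S \<Longrightarrow> traj S p x0 t k = x0 k"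
  by (induction t) (auto simp: gossip_stub)

lemma comm_sym: "wgt n1 ws wd i j = wgt n1 ws wd j i"
  unfolding wgt_def by auto

locale gs =
  fixes n1 n2 :: nat and S :: "nat set" and ws wd :: real and x0 :: "nat \<Rightarrow> real"
  assumes ws_pos: "ws > 0" and wd_pos: "wd > 0"
   and norm: "ws * (real n1 ^ 2 + real n2 ^ 2) + 2 * wd * real n1 * real n2 = 1"
begin

definition P :: "(nat \<times> nat) set" where "P = {1..n1+n2} \<times> {1..n1+n2}"
definition w :: "nat \<times> nat \<Rightarrow> real" where "w a = wgt n1 ws wd (fst a) (snd a)"
definition Lf :: "nat \<Rightarrow> (nat \<Rightarrow> real) \<Rightarrow> real" where
  "Lf i x = (\<Sum>j\<in>{1..n1+n2}. wgt n1 ws wd i j * (x j - x i))"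
definition tr where "tr p t = traj S p x0 t"
definition Yv where "Yv i s p = tr p (Suc s) i - tr p s i - Lf i (tr p s)"
definition Sm where "Sm i t p = (\<Sum>s<t. Yv i s p)"
definition Ex :: "nat \<Rightarrow> ((nat \<Rightarrow> nat \<times> nat) \<Rightarrow> real) \<Rightarrow> real" where
  "Ex t f = (\<Sum>p\<in>PiE {..<t} (\<lambda>_. P). (\<Prod>s<t. w (p s)) * f p)"
definition B where "B = (\<Sum>k\<in>{1..n1+n2}. \<bar>x0 k\<bar>)"
definition K where "K = B + 2 * B * real (n1+n2) * (ws + wd)"

lemma finP: "finite P" unfolding P_def by auto

lemma w_nonneg: "w a \<ge> 0" unfolding w_def wgt_def using ws_pos wd_pos by auto
lemma w_le: "w a \<le> ws + wd" unfolding w_def wgt_def using ws_pos wd_pos by auto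

lemma row_sum: "(\<Sum>j\<in>{1..n1+n2}. wgt n1 ws wd i j) =
   (if i \<le> n1 then ws * n1 + wd * n2 else wd * n1 + ws * n2)"
proof -
  have a: "(\<Sum>j\<in>{1..n1}. wgt n1 ws wd i j) = (if i \<le> n1 then ws else wd) * n1"
    by (simp add: wgt_def comm_def)
  have b: "(\<Sum>j\<in>{n1+1..n1+n2}. wgt n1 ws wd i j) = (if i \<le> n1 then wd else ws) * n2"
    by (simp add: wgt_def comm_def)
  show ?thesis unfolding sum_split_n a b by auto
qed

lemma sum_w: "(\<Sum>a\<in>P. w a) = 1"
proof -
  have "(\<Sum>a\<in>P. w a) = (\<Sum>i\<in>{1..n1+n2}. \<Sum>j\<in>{1..n1+n2}. wgt n1 ws wd i j)"
    unfolding P_def w_def by (simp add: sum.cartesian_product case_prod_unfold)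
  also have "\<dots> = (\<Sum>i\<in>{1..n1+n2}. (if i \<le> n1 then ws * n1 + wd * n2 else wd * n1 + ws * n2))"
    by (rule sum.cong[OF refl], rule row_sum)
  also have "\<dots> = n1 * (ws * n1 + wd * n2) + n2 * (wd * n1 + ws * n2)"
    unfolding sum_split_n by simp
  also have "\<dots> = 1" using norm by (simp add: power2_eq_square algebra_simps)
  finally show ?thesis .
qed

lemma B_ge: "k \<in> {1..n1+n2} \<Longrightarrow> \<bar>x0 k\<bar> \<le> B"
  unfolding B_def by (rule member_le_sum) auto

lemma B_nonneg: "B \<ge> 0" unfolding B_def by (simp add: sum_nonneg)

lemma tr_bound: "(\<And>s. s < t \<Longrightarrow> p s \<in> P) \<Longrightarrow> k \<in> {1..n1+n2} \<Longrightarrow> \<bar>tr p t k\<bar> \<le> B"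
proof (induction t arbitrary: k)
  case 0 then show ?case by (simp add: tr_def B_ge)
next
  case (Suc t)
  have pt: "p t \<in> P" using Suc by auto
  have IH: "\<And>k. k \<in> {1..n1+n2} \<Longrightarrow> \<bar>tr p t k\<bar> \<le> B" using Suc by auto
  have a: "\<bar>tr p t (fst (p t))\<bar> \<le> B" "\<bar>tr p t (snd (p t))\<bar> \<le> B"
    using IH pt unfolding P_def by (auto simp: mem_Times_iff)
  have "tr p (Suc t) k = gossip_step S (fst (p t)) (snd (p t)) (tr p t) k" by (simp add: tr_def)
  then show ?case using gossip_cases[of S "fst (p t)" "snd (p t)" "tr p t" k] a IH[OF Suc.prems(2)]
    by auto
qed

lemma Lf_bound:
  assumes "\<And>k. k \<in> {1..n1+n2} \<Longrightarrow> \<bar>x k\<bar> \<le> B" "i \<in> {1..n1+n2}"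
  shows "\<bar>Lf i x\<bar> \<le> 2 * B * real (n1+n2) * (ws + wd)"
proof -
  have "\<bar>Lf i x\<bar> \<le> (\<Sum>j\<in>{1..n1+n2}. \<bar>wgt n1 ws wd i j * (x j - x i)\<bar>)"
    unfolding Lf_def by (rule sum_abs)
  also have "\<dots> \<le> (\<Sum>j\<in>{1..n1+n2}. (ws + wd) * (2 * B))"
  proof (rule sum_mono)
    fix j assume j: "j \<in> {1..n1+n2}"
    have "\<bar>x j - x i\<bar> \<le> 2 * B" using assms(1)[OF j] assms(1)[OF assms(2)] by auto
    moreover have "\<bar>wgt n1 ws wd i j\<bar> \<le> ws + wd" "0 \<le> \<bar>wgt n1 ws wd i j\<bar>"
      unfolding wgt_def using ws_pos wd_pos by auto
    ultimately show "\<bar>wgt n1 ws wd i j * (x j - x i)\<bar> \<le> (ws + wd) * (2 * B)"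
      unfolding abs_mult by (intro mult_mono) auto
  qed
  also have "\<dots> = 2 * B * real (n1+n2) * (ws + wd)" by simp
  finally show ?thesis .
qed

lemma Yv_bound:
  assumes "\<And>s'. s' \<le> s \<Longrightarrow> p s' \<in> P" "i \<in> {1..n1+n2}"
  shows "\<bar>Yv i s p\<bar> \<le> K"
proof -
  have bt: "\<And>k. k \<in> {1..n1+n2} \<Longrightarrow> \<bar>tr p s k\<bar> \<le> B" using assms(1) by (intro tr_bound) auto
  have pt: "p s \<in> P" using assms by auto
  have a: "\<bar>tr p s (fst (p s))\<bar> \<le> B" "\<bar>tr p s (snd (p s))\<bar> \<le> B"
    using bt pt unfolding P_def by (auto simp: mem_Times_iff)
  have "tr p (Suc s) i = gossip_step S (fst (p s)) (snd (p s)) (tr p s) i" by (simp add: tr_def)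
  then have d: "\<bar>tr p (Suc s) i - tr p s i\<bar> \<le> B"
    using gossip_cases[of S "fst (p s)" "snd (p s)" "tr p s" i] a bt[OF assms(2)] by auto
  have "\<bar>Lf i (tr p s)\<bar> \<le> 2 * B * real (n1+n2) * (ws + wd)" by (rule Lf_bound[OF bt assms(2)])
  with d show ?thesis unfolding Yv_def K_def by linarith
qed

lemma K_nonneg: "K \<ge> 0" unfolding K_def using B_nonneg ws_pos wd_pos by auto

lemma mean_step:
  assumes "i \<notin> S" "i \<in> {1..n1+n2}"
  shows "(\<Sum>a\<in>P. w a * gossip_step S (fst a) (snd a) x i) = x i + Lf i x"
proof -
  have "(\<Sum>a\<in>P. w a * gossip_step S (fst a) (snd a) x i)
      = (\<Sum>a\<in>P. w a * x i) + (\<Sum>a\<in>P. w a * (if fst a = i then (x (snd a) - x i)/2 else 0))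
        + (\<Sum>a\<in>P. w a * (if snd a = i then (x (fst a) - x i)/2 else 0))"
    using gossip_reg[OF assms(1)] by (simp add: sum.distrib[symmetric] algebra_simps)
  also have "(\<Sum>a\<in>P. w a * x i) = x i" using sum_w by (simp add: sum_distrib_right[symmetric])
  also have "(\<Sum>a\<in>P. w a * (if fst a = i then (x (snd a) - x i)/2 else 0))
      = (\<Sum>a1\<in>{1..n1+n2}. \<Sum>a2\<in>{1..n1+n2}. wgt n1 ws wd a1 a2 * (if a1 = i then (x a2 - x i)/2 else 0))"
    unfolding P_def w_def by (simp add: sum.cartesian_product case_prod_unfold)
  also have "\<dots> = (\<Sum>a2\<in>{1..n1+n2}. wgt n1 ws wd i a2 * ((x a2 - x i)/2))"
    using assms(2) by (simp add: if_distrib sum.If_cases)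
  also have "(\<Sum>a\<in>P. w a * (if snd a = i then (x (fst a) - x i)/2 else 0))
      = (\<Sum>a1\<in>{1..n1+n2}. \<Sum>a2\<in>{1..n1+n2}. wgt n1 ws wd a1 a2 * (if a2 = i then (x a1 - x i)/2 else 0))"
    unfolding P_def w_def by (simp add: sum.cartesian_product case_prod_unfold)
  also have "\<dots> = (\<Sum>a1\<in>{1..n1+n2}. wgt n1 ws wd i a1 * ((x a1 - x i)/2))"
    using assms(2) by (simp add: if_distrib sum.If_cases comm_sym)
  finally have e: "(\<Sum>a\<in>P. w a * gossip_step S (fst a) (snd a) x i) = x i
     + (\<Sum>j\<in>{1..n1+n2}. wgt n1 ws wd i j * ((x j - x i)/2)) + (\<Sum>j\<in>{1..n1+n2}. wgt n1 ws wd i j * ((x j - x i)/2))" .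
  have "Lf i x = (\<Sum>j\<in>{1..n1+n2}. wgt n1 ws wd i j * ((x j - x i)/2)) + (\<Sum>j\<in>{1..n1+n2}. wgt n1 ws wd i j * ((x j - x i)/2))"
    unfolding Lf_def sum.distrib[symmetric] by (rule sum.cong) (auto simp: field_simps)
  with e show ?thesis by simp
qed

end


lemma moment_alg:
  fixes w Y :: "'a \<Rightarrow> real"
  assumes fin: "finite P" and wn: "\<And>a. a \<in> P \<Longrightarrow> w a \<ge> 0" and sw: "(\<Sum>a\<in>P. w a) = 1"
    and m: "(\<Sum>a\<in>P. w a * Y a) = 0" and bd: "\<And>a. a \<in> P \<Longrightarrow> \<bar>Y a\<bar> \<le> K"
  shows "(\<Sum>a\<in>P. w a * (S + Y a)^2) \<le> S^2 + K^2"
    and "(\<Sum>a\<in>P. w a * (S + Y a)^4) \<le> S^4 + 6 * K^2 * S^2 + 4 * \<bar>S\<bar> * K^3 + K^4"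
proof -
  have Y2: "(\<Sum>a\<in>P. w a * (Y a)^2) \<le> K^2"
  proof -
    have "(\<Sum>a\<in>P. w a * (Y a)^2) \<le> (\<Sum>a\<in>P. w a * K^2)"
    proof (rule sum_mono)
      fix a assume a: "a \<in> P"
      have "\<bar>Y a\<bar>^2 \<le> K^2" using bd[OF a] by (intro power_mono) auto
      then have "(Y a)^2 \<le> K^2" by simp
      then show "w a * (Y a)^2 \<le> w a * K^2" using wn[OF a] by (rule mult_left_mono)
    qed
    also have "\<dots> = K^2" using sw by (simp add: sum_distrib_right[symmetric])
    finally show ?thesis .
  qed
  have Y3: "\<bar>\<Sum>a\<in>P. w a * (Y a)^3\<bar> \<le> K^3"
  proof -
    have "\<bar>\<Sum>a\<in>P. w a * (Y a)^3\<bar> \<le> (\<Sum>a\<in>P. \<bar>w a * (Y a)^3\<bar>)" by (rule sum_abs)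
    also have "\<dots> \<le> (\<Sum>a\<in>P. w a * K^3)"
    proof (rule sum_mono)
      fix a assume a: "a \<in> P"
      have "\<bar>Y a\<bar>^3 \<le> K^3" using bd[OF a] by (intro power_mono) auto
      then show "\<bar>w a * (Y a)^3\<bar> \<le> w a * K^3" using wn[OF a]
        by (simp add: abs_mult power_abs mult_left_mono)
    qed
    also have "\<dots> = K^3" using sw by (simp add: sum_distrib_right[symmetric])
    finally show ?thesis .
  qed
  have Y4: "(\<Sum>a\<in>P. w a * (Y a)^4) \<le> K^4"
  proof -
    have "(\<Sum>a\<in>P. w a * (Y a)^4) \<le> (\<Sum>a\<in>P. w a * K^4)"
    proof (rule sum_mono)
      fix a assume a: "a \<in> P"
      have "\<bar>Y a\<bar>^4 \<le> K^4" using bd[OF a] by (intro power_mono) auto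
      moreover have "(Y a)^4 = \<bar>Y a\<bar>^4" by (simp add: power_even_abs)
      ultimately have "(Y a)^4 \<le> K^4" by linarith
      then show "w a * (Y a)^4 \<le> w a * K^4" using wn[OF a] by (rule mult_left_mono)
    qed
    also have "\<dots> = K^4" using sw by (simp add: sum_distrib_right[symmetric])
    finally show ?thesis .
  qed
  have e2: "\<And>a. w a * (S + Y a)^2 = S^2 * w a + 2 * S * (w a * Y a) + w a * (Y a)^2"
    by (simp add: eval_nat_numeral algebra_simps)
  have "(\<Sum>a\<in>P. w a * (S + Y a)^2) = S^2 * (\<Sum>a\<in>P. w a) + 2 * S * (\<Sum>a\<in>P. w a * Y a) + (\<Sum>a\<in>P. w a * (Y a)^2)"
    unfolding e2 by (simp add: sum.distrib sum_distrib_left)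
  then show "(\<Sum>a\<in>P. w a * (S + Y a)^2) \<le> S^2 + K^2" using sw m Y2 by simp
  have e4: "\<And>a. w a * (S + Y a)^4 = S^4 * w a + 4 * S^3 * (w a * Y a) + 6 * S^2 * (w a * (Y a)^2)
      + 4 * S * (w a * (Y a)^3) + w a * (Y a)^4"
    by (simp add: eval_nat_numeral algebra_simps)
  have "(\<Sum>a\<in>P. w a * (S + Y a)^4) = S^4 * (\<Sum>a\<in>P. w a) + 4 * S^3 * (\<Sum>a\<in>P. w a * Y a)
     + 6 * S^2 * (\<Sum>a\<in>P. w a * (Y a)^2) + 4 * S * (\<Sum>a\<in>P. w a * (Y a)^3) + (\<Sum>a\<in>P. w a * (Y a)^4)"
    unfolding e4 by (simp add: sum.distrib sum_distrib_left)
  also have "\<dots> = S^4 + 6 * S^2 * (\<Sum>a\<in>P. w a * (Y a)^2) + 4 * S * (\<Sum>a\<in>P. w a * (Y a)^3) + (\<Sum>a\<in>P. w a * (Y a)^4)"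
    using sw m by simp
  moreover have "6 * S^2 * (\<Sum>a\<in>P. w a * (Y a)^2) \<le> 6 * K^2 * S^2"
    using Y2 mult_left_mono[OF Y2, of "6 * S^2"] by (simp add: mult_ac)
  moreover have "4 * S * (\<Sum>a\<in>P. w a * (Y a)^3) \<le> 4 * \<bar>S\<bar> * K^3"
  proof -
    have "4 * S * (\<Sum>a\<in>P. w a * (Y a)^3) \<le> \<bar>4 * S * (\<Sum>a\<in>P. w a * (Y a)^3)\<bar>" by simp
    also have "\<dots> = 4 * \<bar>S\<bar> * \<bar>\<Sum>a\<in>P. w a * (Y a)^3\<bar>" by (simp add: abs_mult)
    also have "\<dots> \<le> 4 * \<bar>S\<bar> * K^3" using Y3 by (intro mult_left_mono) auto
    finally show ?thesis .
  qed
  ultimately show "(\<Sum>a\<in>P. w a * (S + Y a)^4) \<le> S^4 + 6 * K^2 * S^2 + 4 * \<bar>S\<bar> * K^3 + K^4"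
    using Y4 by linarith
qed

context gs begin

lemma Ex_Suc: "Ex (Suc t) f = Ex t (\<lambda>q. \<Sum>a\<in>P. w a * f (q(t:=a)))"
proof -
  let ?T = "PiE {..<t} (\<lambda>_. P)"
  have "Ex (Suc t) f = (\<Sum>(a,q)\<in>P \<times> ?T. (\<Prod>s\<in>insert t {..<t}. w ((q(t:=a)) s)) * f (q(t:=a)))"
    unfolding Ex_def lessThan_Suc
    by (intro sum.reindex_bij_witness[of _ "\<lambda>(y,g). g(t := y)" "\<lambda>g. (g t, g(t := undefined))"])
       (auto simp: PiE_def extensional_def)
  also have "\<dots> = (\<Sum>(a,q)\<in>P \<times> ?T. (w a * (\<Prod>s<t. w (q s))) * f (q(t:=a)))"
  proof (rule sum.cong[OF refl], clarify)
    fix a q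
    have "(\<Prod>s\<in>insert t {..<t}. w ((q(t:=a)) s)) = w a * (\<Prod>s<t. w ((q(t:=a)) s))" by simp
    also have "(\<Prod>s<t. w ((q(t:=a)) s)) = (\<Prod>s<t. w (q s))" by (rule prod.cong) auto
    finally show "(\<Prod>s\<in>insert t {..<t}. w ((q(t:=a)) s)) * f (q(t:=a)) = (w a * (\<Prod>s<t. w (q s))) * f (q(t:=a))"
      by simp
  qed
  also have "\<dots> = (\<Sum>a\<in>P. \<Sum>q\<in>?T. (w a * (\<Prod>s<t. w (q s))) * f (q(t:=a)))"
    by (subst sum.cartesian_product) auto
  also have "\<dots> = (\<Sum>q\<in>?T. \<Sum>a\<in>P. (w a * (\<Prod>s<t. w (q s))) * f (q(t:=a)))"
    by (rule sum.swap)
  also have "\<dots> = Ex t (\<lambda>q. \<Sum>a\<in>P. w a * f (q(t:=a)))"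
    unfolding Ex_def by (rule sum.cong[OF refl]) (simp add: sum_distrib_left algebra_simps)
  finally show ?thesis .
qed

lemma Ex_cong: "(\<And>p. p \<in> PiE {..<t} (\<lambda>_. P) \<Longrightarrow> f p = g p) \<Longrightarrow> Ex t f = Ex t g"
  unfolding Ex_def by (rule sum.cong) auto

lemma Ex_mono: "(\<And>p. p \<in> PiE {..<t} (\<lambda>_. P) \<Longrightarrow> f p \<le> g p) \<Longrightarrow> Ex t f \<le> Ex t g"
  unfolding Ex_def by (intro sum_mono mult_left_mono prod_nonneg w_nonneg) auto

lemma Ex_add: "Ex t (\<lambda>p. f p + g p) = Ex t f + Ex t g"
  unfolding Ex_def by (simp add: sum.distrib algebra_simps)

lemma Ex_cmult: "Ex t (\<lambda>p. c * f p) = c * Ex t f"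
  unfolding Ex_def by (simp add: sum_distrib_left algebra_simps)

lemma Ex_const: "Ex t (\<lambda>_. c) = c"
proof (induction t)
  case 0 then show ?case by (simp add: Ex_def)
next
  case (Suc t)
  have "Ex (Suc t) (\<lambda>_. c) = Ex t (\<lambda>q. \<Sum>a\<in>P. w a * c)" by (rule Ex_Suc)
  also have "(\<lambda>q. \<Sum>a\<in>P. w a * c) = (\<lambda>_. c)" using sum_w by (simp add: sum_distrib_right[symmetric])
  finally show ?case using Suc by simp
qed

lemma Ex_nonneg: "(\<And>p. p \<in> PiE {..<t} (\<lambda>_. P) \<Longrightarrow> 0 \<le> f p) \<Longrightarrow> 0 \<le> Ex t f"
  using Ex_mono[of t "\<lambda>_. 0" f] Ex_const[of t 0] by simp

lemma tr_upd: "tr (q(t:=a)) t = tr q t"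
  unfolding tr_def by (rule traj_prefix) auto

lemma tr_upd_Suc: "tr (q(t:=a)) (Suc t) = gossip_step S (fst a) (snd a) (tr q t)"
  using tr_upd[of q t a] by (simp add: tr_def)

lemma Yv_prefix: "(\<And>s'. s' \<le> s \<Longrightarrow> p s' = q s') \<Longrightarrow> Yv i s p = Yv i s q"
proof -
  assume h: "\<And>s'. s' \<le> s \<Longrightarrow> p s' = q s'"
  have "tr p s = tr q s" unfolding tr_def by (rule traj_prefix) (use h in auto)
  moreover have "tr p (Suc s) = tr q (Suc s)" unfolding tr_def by (rule traj_prefix) (use h in auto)
  ultimately show ?thesis unfolding Yv_def by simp
qed

lemma Sm_prefix: "(\<And>s. s < t \<Longrightarrow> p s = q s) \<Longrightarrow> Sm i t p = Sm i t q"
  unfolding Sm_def by (intro sum.cong refl Yv_prefix) auto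

lemma Sm_upd: "Sm i t (q(t:=a)) = Sm i t q"
  by (rule Sm_prefix) auto

lemma Sm_Suc: "Sm i (Suc t) p = Sm i t p + Yv i t p"
  unfolding Sm_def by simp

lemma Sm_bound:
  assumes "\<And>s. s < t \<Longrightarrow> p s \<in> P" "i \<in> {1..n1+n2}"
  shows "\<bar>Sm i t p\<bar> \<le> K * t"
proof -
  have "\<bar>Sm i t p\<bar> \<le> (\<Sum>s<t. \<bar>Yv i s p\<bar>)" unfolding Sm_def by (rule sum_abs)
  also have "\<dots> \<le> (\<Sum>s<t. K)" by (intro sum_mono Yv_bound) (use assms in auto)
  finally show ?thesis by (simp add: mult.commute)
qed

lemma martingale:
  assumes "i \<notin> S" "i \<in> {1..n1+n2}"
  shows "(\<Sum>a\<in>P. w a * Yv i t (q(t:=a))) = 0"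
proof -
  have "(\<Sum>a\<in>P. w a * Yv i t (q(t:=a))) =
     (\<Sum>a\<in>P. w a * gossip_step S (fst a) (snd a) (tr q t) i) - (\<Sum>a\<in>P. w a * (tr q t i + Lf i (tr q t)))"
    unfolding Yv_def tr_upd tr_upd_Suc by (simp add: sum_subtractf[symmetric] algebra_simps)
  also have "(\<Sum>a\<in>P. w a * (tr q t i + Lf i (tr q t))) = tr q t i + Lf i (tr q t)"
    using sum_w by (simp add: sum_distrib_right[symmetric])
  finally show ?thesis using mean_step[OF assms, of "tr q t"] by linarith
qed

lemma moment2:
  assumes "i \<notin> S" "i \<in> {1..n1+n2}"
  shows "Ex t (\<lambda>p. (Sm i t p)^2) \<le> K^2 * t"
proof (induction t)
  case 0 then show ?case by (simp add: Ex_def Sm_def)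
next
  case (Suc t)
  have "Ex (Suc t) (\<lambda>p. (Sm i (Suc t) p)^2) = Ex t (\<lambda>q. \<Sum>a\<in>P. w a * (Sm i t q + Yv i t (q(t:=a)))^2)"
    unfolding Ex_Suc Sm_Suc by (intro Ex_cong sum.cong refl) (simp add: Sm_upd)
  also have "\<dots> \<le> Ex t (\<lambda>q. (Sm i t q)^2 + K^2)"
  proof (rule Ex_mono)
    fix q assume q: "q \<in> PiE {..<t} (\<lambda>_. P)"
    show "(\<Sum>a\<in>P. w a * (Sm i t q + Yv i t (q(t:=a)))^2) \<le> (Sm i t q)^2 + K^2"
    proof (rule moment_alg(1)[OF finP w_nonneg sum_w martingale[OF assms]])
      fix a assume a: "a \<in> P"
      show "\<bar>Yv i t (q(t:=a))\<bar> \<le> K" using q a assms by (intro Yv_bound) (auto simp: PiE_iff)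
    qed
  qed
  also have "\<dots> = Ex t (\<lambda>q. (Sm i t q)^2) + K^2" by (simp add: Ex_add Ex_const)
  also have "\<dots> \<le> K^2 * Suc t" using Suc by (simp add: algebra_simps)
  finally show ?case .
qed

lemma moment4:
  assumes "i \<notin> S" "i \<in> {1..n1+n2}"
  shows "Ex t (\<lambda>p. (Sm i t p)^4) \<le> 10 * K^4 * (real t)^2"
proof (induction t)
  case 0 then show ?case by (simp add: Ex_def Sm_def)
next
  case (Suc t)
  have "Ex (Suc t) (\<lambda>p. (Sm i (Suc t) p)^4) = Ex t (\<lambda>q. \<Sum>a\<in>P. w a * (Sm i t q + Yv i t (q(t:=a)))^4)"
    unfolding Ex_Suc Sm_Suc by (intro Ex_cong sum.cong refl) (simp add: Sm_upd)
  also have "\<dots> \<le> Ex t (\<lambda>q. (Sm i t q)^4 + (6 * K^2) * (Sm i t q)^2 + (4 * K^4 * t + K^4))"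
  proof (rule Ex_mono)
    fix q assume q: "q \<in> PiE {..<t} (\<lambda>_. P)"
    have "(\<Sum>a\<in>P. w a * (Sm i t q + Yv i t (q(t:=a)))^4) \<le>
       (Sm i t q)^4 + 6 * K^2 * (Sm i t q)^2 + 4 * \<bar>Sm i t q\<bar> * K^3 + K^4"
    proof (rule moment_alg(2)[OF finP w_nonneg sum_w martingale[OF assms]])
      fix a assume a: "a \<in> P"
      show "\<bar>Yv i t (q(t:=a))\<bar> \<le> K" using q a assms by (intro Yv_bound) (auto simp: PiE_iff)
    qed
    moreover have "\<bar>Sm i t q\<bar> \<le> K * t" using q assms by (intro Sm_bound) (auto simp: PiE_iff)
    then have "4 * \<bar>Sm i t q\<bar> * K^3 \<le> 4 * (K * t) * K^3"
      using K_nonneg by (intro mult_right_mono mult_left_mono) auto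
    moreover have "4 * (K * t) * K^3 = 4 * K^4 * t" by (simp add: eval_nat_numeral)
    ultimately show "(\<Sum>a\<in>P. w a * (Sm i t q + Yv i t (q(t:=a)))^4) \<le>
       (Sm i t q)^4 + (6 * K^2) * (Sm i t q)^2 + (4 * K^4 * t + K^4)"
      by linarith
  qed
  also have "\<dots> = Ex t (\<lambda>q. (Sm i t q)^4) + (6 * K^2) * Ex t (\<lambda>q. (Sm i t q)^2) + (4 * K^4 * t + K^4)"
    by (simp add: Ex_add Ex_const Ex_cmult)
  also have "\<dots> \<le> 10 * K^4 * (real t)^2 + (6 * K^2) * (K^2 * t) + (4 * K^4 * t + K^4)"
    using Suc moment2[OF assms, of t] K_nonneg by (intro add_mono mult_left_mono) auto
  also have "\<dots> \<le> 10 * K^4 * (real (Suc t))^2"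
  proof -
    have Q: "K^4 * real t \<ge> 0" "K^4 \<ge> 0" using K_nonneg by auto
    have "(6 * K^2) * (K^2 * t) = 6 * (K^4 * t)" by (simp add: eval_nat_numeral)
    moreover have "10 * K^4 * (real (Suc t))^2 = 10 * K^4 * (real t)^2 + 20 * (K^4 * t) + 10 * K^4"
      by (simp add: power2_eq_square algebra_simps)
    ultimately show ?thesis using Q by linarith
  qed
  finally show ?case .
qed

end


locale gsM = gs n1 n2 S ws wd x0 + prob_space M
  for n1 n2 S ws wd x0 and M :: "'w measure" +
  fixes I :: "nat \<Rightarrow> 'w \<Rightarrow> nat \<times> nat"
  assumes indep: "indep_vars (\<lambda>_. count_space UNIV) I UNIV"
    and dist: "\<And>t a b. a \<in> {1..n1+n2} \<Longrightarrow> b \<in> {1..n1+n2} \<Longrightarrow>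
           measure M {\<omega>\<in>space M. I t \<omega> = (a, b)} = wgt n1 ws wd a b"
begin

lemma I_meas: "I t \<in> measurable M (count_space UNIV)"
  using indep unfolding indep_vars_def by auto

lemma ev_meas: "{\<omega>\<in>space M. I t \<omega> = c} \<in> sets M"
proof -
  have "{\<omega>\<in>space M. I t \<omega> = c} = I t -` {c} \<inter> space M" by auto
  then show ?thesis using measurable_sets[OF I_meas, of "{c}" t] by simp
qed

lemma prob_ev: "c \<in> P \<Longrightarrow> prob {\<omega>\<in>space M. I t \<omega> = c} = w c"
  unfolding P_def w_def by (cases c) (auto simp: dist)

lemma cyl_meas: "{\<omega>\<in>space M. \<forall>s\<in>{..<t}. I s \<omega> = p s} \<in> sets M"
  by (rule sets.sets_Collect_finite_All) (auto intro: ev_meas)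

lemma prob_cyl:
  assumes p: "p \<in> PiE {..<t} (\<lambda>_. P)"
  shows "prob {\<omega>\<in>space M. \<forall>s\<in>{..<t}. I s \<omega> = p s} = (\<Prod>s<t. w (p s))"
proof (cases "t = 0")
  case True then show ?thesis by (simp add: prob_space)
next
  case False
  let ?A = "\<lambda>s. I s -` {p s} \<inter> space M"
  have eq: "{\<omega>\<in>space M. \<forall>s\<in>{..<t}. I s \<omega> = p s} = (\<Inter>s\<in>{..<t}. ?A s)"
    using False by auto
  have "prob (\<Inter>s\<in>{..<t}. ?A s) = (\<Prod>s\<in>{..<t}. prob (?A s))"
    apply (rule indep_setsD[OF indep[unfolded indep_vars_def2, THEN conjunct2]])
    using False by auto
  also have "\<dots> = (\<Prod>s<t. w (p s))"
  proof (rule prod.cong[OF refl])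
    fix s assume "s \<in> {..<t}"
    then have ps: "p s \<in> P" using p by auto
    have "?A s = {\<omega>\<in>space M. I s \<omega> = p s}" by auto
    then show "prob (?A s) = w (p s)" using prob_ev[OF ps] by simp
  qed
  finally show ?thesis using eq by simp
qed

lemma cyl_union:
  assumes "A \<subseteq> PiE {..<t} (\<lambda>_. P)"
  shows "{\<omega>\<in>space M. restrict (\<lambda>s. I s \<omega>) {..<t} \<in> A}
       = (\<Union>p\<in>A. {\<omega>\<in>space M. \<forall>s\<in>{..<t}. I s \<omega> = p s})"
proof (intro set_eqI iffI)
  fix \<omega> assume "\<omega> \<in> {\<omega>\<in>space M. restrict (\<lambda>s. I s \<omega>) {..<t} \<in> A}"
  then show "\<omega> \<in> (\<Union>p\<in>A. {\<omega>\<in>space M. \<forall>s\<in>{..<t}. I s \<omega> = p s})"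
    by (intro UN_I[of "restrict (\<lambda>s. I s \<omega>) {..<t}"]) auto
next
  fix \<omega> assume "\<omega> \<in> (\<Union>p\<in>A. {\<omega>\<in>space M. \<forall>s\<in>{..<t}. I s \<omega> = p s})"
  then obtain p where p: "p \<in> A" "\<omega> \<in> space M" "\<forall>s\<in>{..<t}. I s \<omega> = p s" by auto
  have "p \<in> PiE {..<t} (\<lambda>_. P)" using p assms by auto
  then have "restrict (\<lambda>s. I s \<omega>) {..<t} = p"
    using p by (auto simp: PiE_def extensional_def restrict_def fun_eq_iff)
  then show "\<omega> \<in> {\<omega>\<in>space M. restrict (\<lambda>s. I s \<omega>) {..<t} \<in> A}" using p by auto
qed

lemma finPiE: "finite (PiE {..<t::nat} (\<lambda>_. P))"
  by (intro finite_PiE) (auto simp: finP)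

lemma set_meas:
  assumes "A \<subseteq> PiE {..<t} (\<lambda>_. P)"
  shows "{\<omega>\<in>space M. restrict (\<lambda>s. I s \<omega>) {..<t} \<in> A} \<in> sets M"
proof -
  have "finite A" using assms finPiE finite_subset by blast
  then show ?thesis unfolding cyl_union[OF assms] by (intro sets.finite_UN cyl_meas) auto
qed

lemma prob_set:
  assumes "A \<subseteq> PiE {..<t} (\<lambda>_. P)"
  shows "prob {\<omega>\<in>space M. restrict (\<lambda>s. I s \<omega>) {..<t} \<in> A} = Ex t (\<lambda>p. if p \<in> A then 1 else 0)"
proof -
  have fA: "finite A" using assms finPiE finite_subset by blast
  have "prob {\<omega>\<in>space M. restrict (\<lambda>s. I s \<omega>) {..<t} \<in> A} =
      (\<Sum>p\<in>A. prob {\<omega>\<in>space M. \<forall>s\<in>{..<t}. I s \<omega> = p s})"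
    unfolding cyl_union[OF assms]
  proof (rule measure_finite_Union[OF fA])
    show "(\<lambda>p. {\<omega> \<in> space M. \<forall>s\<in>{..<t}. I s \<omega> = p s}) ` A \<subseteq> sets M" using cyl_meas by auto
    show "disjoint_family_on (\<lambda>p. {\<omega> \<in> space M. \<forall>s\<in>{..<t}. I s \<omega> = p s}) A"
      unfolding disjoint_family_on_def
    proof (intro ballI impI)
      fix p q assume pq: "p \<in> A" "q \<in> A" "p \<noteq> q"
      then have "p \<in> PiE {..<t} (\<lambda>_. P)" "q \<in> PiE {..<t} (\<lambda>_. P)" using assms by auto
      then obtain s where "s < t" "p s \<noteq> q s" using pq(3)
        by (metis PiE_ext lessThan_iff)
      then show "{\<omega> \<in> space M. \<forall>s\<in>{..<t}. I s \<omega> = p s} \<inter> {\<omega> \<in> space M. \<forall>s\<in>{..<t}. I s \<omega> = q s} = {}"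
        by auto
    qed
    show "\<And>p. p \<in> A \<Longrightarrow> emeasure M {\<omega> \<in> space M. \<forall>s\<in>{..<t}. I s \<omega> = p s} \<noteq> \<infinity>"
      by (simp add: emeasure_eq_measure)
  qed
  also have "\<dots> = (\<Sum>p\<in>A. (\<Prod>s<t. w (p s)))"
    using assms by (intro sum.cong refl prob_cyl) auto
  also have "\<dots> = Ex t (\<lambda>p. if p \<in> A then 1 else 0)"
  proof -
    have "Ex t (\<lambda>p. if p \<in> A then 1 else 0) = (\<Sum>p\<in>PiE {..<t} (\<lambda>_. P). if p \<in> A then (\<Prod>s<t. w (p s)) else 0)"
      unfolding Ex_def by (rule sum.cong) auto
    also have "\<dots> = (\<Sum>p\<in>PiE {..<t} (\<lambda>_. P) \<inter> A. (\<Prod>s<t. w (p s)))"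
      by (rule sum.inter_restrict[OF finPiE, symmetric])
    also have "PiE {..<t} (\<lambda>_. P) \<inter> A = A" using assms by auto
    finally show ?thesis by simp
  qed
  finally show ?thesis .
qed

lemma AE_inP: "AE \<omega> in M. \<forall>t. I t \<omega> \<in> P"
proof -
  have "AE \<omega> in M. I t \<omega> \<in> P" for t
  proof -
    have eq: "{\<omega>\<in>space M. I t \<omega> \<in> P} = (\<Union>c\<in>P. {\<omega>\<in>space M. I t \<omega> = c})" by auto
    have "prob {\<omega>\<in>space M. I t \<omega> \<in> P} = (\<Sum>c\<in>P. prob {\<omega>\<in>space M. I t \<omega> = c})"
      unfolding eq
    proof (rule measure_finite_Union[OF finP])
      show "(\<lambda>c. {\<omega> \<in> space M. I t \<omega> = c}) ` P \<subseteq> sets M" using ev_meas by auto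
      show "disjoint_family_on (\<lambda>c. {\<omega> \<in> space M. I t \<omega> = c}) P"
        by (auto simp: disjoint_family_on_def)
      show "\<And>c. c \<in> P \<Longrightarrow> emeasure M {\<omega> \<in> space M. I t \<omega> = c} \<noteq> \<infinity>"
        by (simp add: emeasure_eq_measure)
    qed
    also have "\<dots> = 1" using sum_w by (simp add: prob_ev)
    finally have "prob {\<omega>\<in>space M. I t \<omega> \<in> P} = 1" .
    moreover have "{\<omega>\<in>space M. I t \<omega> \<in> P} \<in> sets M"
      unfolding eq using finP ev_meas by (intro sets.finite_UN) auto
    ultimately have "AE \<omega> in M. \<omega> \<in> {\<omega>\<in>space M. I t \<omega> \<in> P}" using prob_eq_1 by blast
    then show ?thesis by auto
  qed
  then show ?thesis by (simp add: AE_all_countable)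
qed

end


context gsM begin

lemma bc_step:
  fixes \<delta> :: real
  assumes reg: "i \<notin> S" "i \<in> {1..n1+n2}" and dpos: "\<delta> > 0"
  shows "AE \<omega> in M. eventually (\<lambda>t. \<bar>Sm i t (\<lambda>s. I s \<omega>)\<bar> \<le> \<delta> * t) sequentially"
proof -
  define A where "A t = {p \<in> PiE {..<t} (\<lambda>_. P). \<bar>Sm i t p\<bar> > \<delta> * t}" for t
  define E where "E t = {\<omega>\<in>space M. restrict (\<lambda>s. I s \<omega>) {..<t} \<in> A t}" for t
  have Asub: "A t \<subseteq> PiE {..<t} (\<lambda>_. P)" for t unfolding A_def by auto
  have Esets: "E t \<in> sets M" for t unfolding E_def by (rule set_meas[OF Asub])
  define C where "C = 10 * K^4 / \<delta>^4"
  have pE: "prob (E t) \<le> C * inverse (real t ^ 2)" for t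
  proof (cases "t = 0")
    case True
    then have "A t = {}" unfolding A_def Sm_def by auto
    then have "E t = {}" unfolding E_def by auto
    then show ?thesis using True by simp
  next
    case False
    then have tpos: "real t > 0" by simp
    have "prob (E t) = Ex t (\<lambda>p. if p \<in> A t then 1 else 0)" unfolding E_def by (rule prob_set[OF Asub])
    also have "\<dots> \<le> Ex t (\<lambda>p. (Sm i t p)^4 / (\<delta> * t)^4)"
    proof (rule Ex_mono)
      fix p assume p: "p \<in> PiE {..<t} (\<lambda>_. P)"
      show "(if p \<in> A t then 1 else 0) \<le> (Sm i t p)^4 / (\<delta> * t)^4"
      proof (cases "p \<in> A t")
        case True
        then have "\<delta> * t < \<bar>Sm i t p\<bar>" unfolding A_def by auto
        then have "(\<delta> * t)^4 \<le> \<bar>Sm i t p\<bar>^4" using dpos tpos by (intro power_mono) auto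
        moreover have "\<bar>Sm i t p\<bar>^4 = (Sm i t p)^4" by (simp add: power_even_abs)
        moreover have "(\<delta> * t)^4 > 0" using dpos tpos by simp
        ultimately show ?thesis using True by simp
      next
        case False then show ?thesis by (simp add: divide_nonneg_pos)
      qed
    qed
    also have "\<dots> = Ex t (\<lambda>p. (Sm i t p)^4) / (\<delta> * t)^4"
      using Ex_cmult[of t "inverse ((\<delta> * t)^4)" "\<lambda>p. (Sm i t p)^4"]
      by (simp add: divide_inverse mult.commute)
    also have "\<dots> \<le> 10 * K^4 * (real t)^2 / (\<delta> * t)^4"
      using moment4[OF reg, of t] dpos tpos by (intro divide_right_mono) auto
    also have "\<dots> = C * inverse (real t ^ 2)"
      unfolding C_def using dpos tpos by (simp add: field_simps power_mult_distrib eval_nat_numeral)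
    finally show ?thesis .
  qed
  have summ: "summable (\<lambda>t. measure M (E t))"
  proof (rule summable_comparison_test'[where N=0])
    show "summable (\<lambda>t. C * inverse (real t ^ 2))"
      by (intro summable_mult inverse_power_summable) auto
    show "norm (measure M (E t)) \<le> C * inverse (real t ^ 2)" for t using pE[of t] by simp
  qed
  have ae1: "AE \<omega> in M. eventually (\<lambda>t. \<omega> \<in> space M - E t) sequentially"
    by (rule borel_cantelli_AE1[OF Esets _ summ]) (simp add: emeasure_eq_measure)
  show ?thesis
    using ae1 AE_inP AE_space
  proof eventually_elim
    case (elim \<omega>)
    from elim(1) show ?case
    proof (rule eventually_mono)
      fix t assume "\<omega> \<in> space M - E t"
      then have nE: "restrict (\<lambda>s. I s \<omega>) {..<t} \<notin> A t" using elim(3) unfolding E_def by auto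
      have inP: "restrict (\<lambda>s. I s \<omega>) {..<t} \<in> PiE {..<t} (\<lambda>_. P)" using elim(2) by auto
      have "Sm i t (restrict (\<lambda>s. I s \<omega>) {..<t}) = Sm i t (\<lambda>s. I s \<omega>)"
        by (rule Sm_prefix) auto
      then show "\<bar>Sm i t (\<lambda>s. I s \<omega>)\<bar> \<le> \<delta> * t" using nE inP unfolding A_def by auto
    qed
  qed
qed

lemma slln:
  assumes reg: "i \<notin> S" "i \<in> {1..n1+n2}"
  shows "AE \<omega> in M. (\<lambda>t. Sm i t (\<lambda>s. I s \<omega>) / real t) \<longlonglongrightarrow> 0"
proof -
  have "AE \<omega> in M. \<forall>m::nat. eventually (\<lambda>t. \<bar>Sm i t (\<lambda>s. I s \<omega>)\<bar> \<le> inverse (real (Suc m)) * t) sequentially"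
    unfolding AE_all_countable by (intro allI bc_step[OF reg]) auto
  then show ?thesis
  proof (rule AE_mp, intro AE_I2 impI)
    fix \<omega> assume h: "\<forall>m::nat. eventually (\<lambda>t. \<bar>Sm i t (\<lambda>s. I s \<omega>)\<bar> \<le> inverse (real (Suc m)) * t) sequentially"
    show "(\<lambda>t. Sm i t (\<lambda>s. I s \<omega>) / real t) \<longlonglongrightarrow> 0"
    proof (rule LIMSEQ_I)
      fix r :: real assume r: "r > 0"
      obtain k :: nat where k: "k > 0" "inverse (real k) < r" using ex_inverse_of_nat_less[OF r] by auto
      have "eventually (\<lambda>t. \<bar>Sm i t (\<lambda>s. I s \<omega>)\<bar> \<le> inverse (real (Suc (k - 1))) * t) sequentially"
        using h by blast
      moreover have "Suc (k - 1) = k" using k by simp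
      ultimately have ev: "eventually (\<lambda>t. \<bar>Sm i t (\<lambda>s. I s \<omega>)\<bar> \<le> inverse (real k) * t) sequentially"
        by simp
      then obtain N where N: "\<And>t. t \<ge> N \<Longrightarrow> \<bar>Sm i t (\<lambda>s. I s \<omega>)\<bar> \<le> inverse (real k) * t"
        unfolding eventually_sequentially by blast
      show "\<exists>no. \<forall>t\<ge>no. norm (Sm i t (\<lambda>s. I s \<omega>) / real t - 0) < r"
      proof (intro exI allI impI)
        fix t assume t: "t \<ge> max N 1"
        then have tp: "real t > 0" by simp
        have "\<bar>Sm i t (\<lambda>s. I s \<omega>)\<bar> / t \<le> inverse (real k)"
          using N[of t] t tp by (simp add: divide_le_eq)
        then show "norm (Sm i t (\<lambda>s. I s \<omega>) / real t - 0) < r" using k tp by simp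
      qed
    qed
  qed
qed

end


lemma harmonic_unbounded:
  fixes T :: nat and Mb :: real
  shows "\<exists>k. (\<Sum>s<k. 1 / real (T + s + 1)) > Mb"
proof (rule ccontr)
  assume "\<not> ?thesis"
  then have le: "\<And>k. (\<Sum>s<k. 1 / real (T + s + 1)) \<le> Mb" by (simp add: not_less)
  have "summable (\<lambda>s. 1 / real (T + s + 1))"
    by (rule summableI_nonneg_bounded[OF _ le]) simp
  then have "summable (\<lambda>s. inverse (real (s + (T + 1))))"
    by (simp add: divide_inverse add_ac)
  then have "summable (\<lambda>n. inverse (real n))" by (subst (asm) summable_iff_shift)
  then show False using not_summable_harmonic[where 'a=real] by simp
qed

lemma contr_seq:
  fixes u \<epsilon> :: "nat \<Rightarrow> real" and c :: real
  assumes u0: "\<And>t. u t \<ge> 0" and c: "c > 0" and eps: "\<epsilon> \<longlonglongrightarrow> 0"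
    and rec: "\<And>t. t \<ge> T \<Longrightarrow> u (Suc t) \<le> (1 - c / real (Suc t)) * u t + \<epsilon> t / real (Suc t)"
  shows "u \<longlonglongrightarrow> 0"
proof (rule LIMSEQ_I)
  fix r :: real assume r: "r > 0"
  define \<eta> where "\<eta> = r / 2"
  have eta: "\<eta> > 0" "\<eta> < r" using r by (auto simp: \<eta>_def)
  have ev1: "eventually (\<lambda>t. \<bar>\<epsilon> t\<bar> \<le> c * \<eta> / 2) sequentially"
  proof -
    have "eventually (\<lambda>t. dist (\<epsilon> t) 0 < c * \<eta> / 2) sequentially"
      using eps c eta by (intro tendstoD) auto
    then show ?thesis by eventually_elim (simp add: dist_real_def)
  qed
  have ev2: "eventually (\<lambda>t. c \<le> real (Suc t)) sequentially"
  proof -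
    obtain N :: nat where "c \<le> real N" using real_arch_simple by blast
    then show ?thesis unfolding eventually_sequentially by (intro exI[of _ N]) auto
  qed
  have ev3: "eventually (\<lambda>t. t \<ge> T) sequentially" by (rule eventually_ge_at_top)
  from eventually_conj[OF ev1 eventually_conj[OF ev2 ev3]]
  obtain T1 where T1: "\<And>t. t \<ge> T1 \<Longrightarrow> \<bar>\<epsilon> t\<bar> \<le> c * \<eta> / 2 \<and> c \<le> real (Suc t) \<and> t \<ge> T"
    unfolding eventually_sequentially by blast
  have step: "u (Suc t) \<le> (1 - c / real (Suc t)) * u t + (c / real (Suc t)) * (\<eta> / 2)
     \<and> 0 < c / real (Suc t) \<and> c / real (Suc t) \<le> 1"
    if t: "t \<ge> T1" for t
  proof -
    have h: "\<bar>\<epsilon> t\<bar> \<le> c * \<eta> / 2" "c \<le> real (Suc t)" "t \<ge> T" using T1[OF t] by auto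
    have "\<epsilon> t / real (Suc t) \<le> (c * \<eta> / 2) / real (Suc t)"
      using h(1) by (intro divide_right_mono) auto
    also have "\<dots> = (c / real (Suc t)) * (\<eta> / 2)" by simp
    finally have e: "\<epsilon> t / real (Suc t) \<le> (c / real (Suc t)) * (\<eta> / 2)" .
    have "c / real (Suc t) \<le> 1" using h(2) by simp
    moreover have "0 < c / real (Suc t)" using c by simp
    moreover have "u (Suc t) \<le> (1 - c / real (Suc t)) * u t + (c / real (Suc t)) * (\<eta> / 2)"
      using rec[OF h(3)] e by linarith
    ultimately show ?thesis by blast
  qed
  have stay: "u (Suc t) \<le> \<eta>" if t: "t \<ge> T1" and ut: "u t \<le> \<eta>" for t
  proof -
    define q where "q = c / real (Suc t)"
    have q: "u (Suc t) \<le> (1 - q) * u t + q * (\<eta> / 2)" "0 < q" "q \<le> 1" using step[OF t] unfolding q_def by auto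
    have "(1 - q) * u t \<le> (1 - q) * \<eta>" using q ut by (intro mult_left_mono) auto
    moreover have "(1 - q) * \<eta> = \<eta> - q * \<eta>" by (simp add: algebra_simps)
    moreover have "q * \<eta> > 0" using q eta by simp
    ultimately show ?thesis using q by linarith
  qed
  have down: "u (Suc t) \<le> u t - (c * \<eta> / 2) * (1 / real (t + 1))" if t: "t \<ge> T1" and ut: "u t > \<eta>" for t
  proof -
    define q where "q = c / real (Suc t)"
    have q: "u (Suc t) \<le> (1 - q) * u t + q * (\<eta> / 2)" "0 < q" "q \<le> 1" using step[OF t] unfolding q_def by auto
    have "q * \<eta> \<le> q * u t" using q ut by (intro mult_left_mono) auto
    moreover have "(1 - q) * u t = u t - q * u t" by (simp add: algebra_simps)
    ultimately have "u (Suc t) \<le> u t - q * (\<eta> / 2)" using q by linarith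
    moreover have "q * (\<eta> / 2) = (c * \<eta> / 2) * (1 / real (t + 1))" unfolding q_def by simp
    ultimately show ?thesis by linarith
  qed
  have hit: "\<exists>t0\<ge>T1. u t0 \<le> \<eta>"
  proof (rule ccontr)
    assume "\<not> ?thesis"
    then have gt: "\<And>t. t \<ge> T1 \<Longrightarrow> u t > \<eta>" by (metis not_le)
    have ind: "u (T1 + k) \<le> u T1 - (c * \<eta> / 2) * (\<Sum>s<k. 1 / real (T1 + s + 1))" for k
    proof (induction k)
      case 0 then show ?case by simp
    next
      case (Suc k)
      have "u (T1 + Suc k) = u (Suc (T1 + k))" by simp
      also have "\<dots> \<le> u (T1 + k) - (c * \<eta> / 2) * (1 / real (T1 + k + 1))"
        using down[of "T1 + k"] gt[of "T1 + k"] by simp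
      also have "\<dots> \<le> u T1 - (c * \<eta> / 2) * (\<Sum>s<Suc k. 1 / real (T1 + s + 1))"
        using Suc by (simp add: algebra_simps)
      finally show ?case .
    qed
    obtain k where k: "(\<Sum>s<k. 1 / real (T1 + s + 1)) > u T1 / (c * \<eta> / 2)"
      using harmonic_unbounded by blast
    have cpos: "c * \<eta> / 2 > 0" using c eta by simp
    then have "(c * \<eta> / 2) * (\<Sum>s<k. 1 / real (T1 + s + 1)) > u T1"
      using k by (simp add: divide_less_eq mult.commute)
    then have "u (T1 + k) < 0" using ind[of k] by simp
    then show False using u0[of "T1 + k"] by simp
  qed
  then obtain t0 where t0: "t0 \<ge> T1" "u t0 \<le> \<eta>" by blast
  have "u t \<le> \<eta>" if "t \<ge> t0" for t
    using that
  proof (induction t rule: dec_induct)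
    case base then show ?case using t0 by simp
  next
    case (step t) then show ?case using stay[of t] t0 by simp
  qed
  then show "\<exists>no. \<forall>t\<ge>no. norm (u t - 0) < r"
    using u0 eta by (intro exI[of _ t0]) (auto intro: le_less_trans)
qed


lemma rm:
  fixes wv g h :: "nat \<Rightarrow> real" and G H w0 :: real
  assumes rec: "\<And>t. wv (Suc t) = (let wt = wv t - 1 / real (Suc t) * sgn (g (Suc t)) * (g (Suc t) * wv t + h (Suc t))
                  in if \<bar>wt\<bar> < 2 then wt else 1/2)"
    and gl: "g \<longlonglongrightarrow> G" and G: "G \<noteq> 0" and hl: "h \<longlonglongrightarrow> H" and eq: "G * w0 + H = 0"
    and w0: "\<bar>w0\<bar> \<le> 3/4"
  shows "wv \<longlonglongrightarrow> w0"
proof -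
  define u where "u t = \<bar>wv t - w0\<bar>" for t
  define \<epsilon> where "\<epsilon> t = \<bar>\<bar>g (Suc t)\<bar> * w0 + sgn G * h (Suc t)\<bar>" for t
  have gS: "(\<lambda>t. g (Suc t)) \<longlonglongrightarrow> G" using gl by (rule LIMSEQ_Suc)
  have hS: "(\<lambda>t. h (Suc t)) \<longlonglongrightarrow> H" using hl by (rule LIMSEQ_Suc)
  have "\<epsilon> \<longlonglongrightarrow> \<bar>\<bar>G\<bar> * w0 + sgn G * H\<bar>"
    unfolding \<epsilon>_def by (intro tendsto_intros gS hS)
  moreover have "\<bar>G\<bar> * w0 + sgn G * H = sgn G * (G * w0 + H)"
    by (simp add: abs_sgn algebra_simps)
  ultimately have eps: "\<epsilon> \<longlonglongrightarrow> 0" using eq by simp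
  have Gp: "\<bar>G\<bar> > 0" using G by simp
  have ev_sgn: "eventually (\<lambda>t. sgn (g (Suc t)) = sgn G) sequentially"
  proof (cases "G > 0")
    case True
    have "eventually (\<lambda>t. g (Suc t) > 0) sequentially" using order_tendstoD(1)[OF gS True] .
    then show ?thesis by eventually_elim (use True in simp)
  next
    case False
    then have Gn: "G < 0" using G by simp
    have "eventually (\<lambda>t. g (Suc t) < 0) sequentially" using order_tendstoD(2)[OF gS Gn] .
    then show ?thesis by eventually_elim (use Gn in simp)
  qed
  have gA: "(\<lambda>t. \<bar>g (Suc t)\<bar>) \<longlonglongrightarrow> \<bar>G\<bar>" using gS by (rule tendsto_rabs)
  have ev_lo: "eventually (\<lambda>t. \<bar>g (Suc t)\<bar> > \<bar>G\<bar> / 2) sequentially"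
  proof -
    have "\<bar>G\<bar> / 2 < \<bar>G\<bar>" using Gp by simp
    from order_tendstoD(1)[OF gA this] show ?thesis .
  qed
  have ev_hi1: "eventually (\<lambda>t. \<bar>g (Suc t)\<bar> < \<bar>G\<bar> + 1) sequentially"
    using order_tendstoD(2)[OF gA] by simp
  have ev_hi2: "eventually (\<lambda>t. \<bar>G\<bar> + 1 \<le> real (Suc t)) sequentially"
  proof -
    obtain N :: nat where "\<bar>G\<bar> + 1 \<le> real N" using real_arch_simple by blast
    then show ?thesis unfolding eventually_sequentially by (intro exI[of _ N]) auto
  qed
  from eventually_conj[OF ev_sgn eventually_conj[OF ev_lo eventually_conj[OF ev_hi1 ev_hi2]]]
  obtain T where T: "\<And>t. t \<ge> T \<Longrightarrow> sgn (g (Suc t)) = sgn G \<and> \<bar>g (Suc t)\<bar> > \<bar>G\<bar> / 2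
      \<and> \<bar>g (Suc t)\<bar> \<le> real (Suc t)"
    unfolding eventually_sequentially by fastforce
  have rec_u: "u (Suc t) \<le> (1 - (\<bar>G\<bar> / 2) / real (Suc t)) * u t + \<epsilon> t / real (Suc t)"
    if t: "t \<ge> T" for t
  proof -
    define g' where "g' = g (Suc t)"
    define h' where "h' = h (Suc t)"
    define N where "N = real (Suc t)"
    define q where "q = \<bar>g'\<bar> / N"
    define wt where "wt = wv t - 1 / N * sgn g' * (g' * wv t + h')"
    have Np: "N > 0" unfolding N_def by simp
    have hT: "sgn g' = sgn G" "\<bar>g'\<bar> > \<bar>G\<bar> / 2" "\<bar>g'\<bar> \<le> N"
      using T[OF t] unfolding g'_def N_def by auto
    have q1: "q \<le> 1" unfolding q_def using hT(3) Np by simp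
    have q2: "(\<bar>G\<bar> / 2) / N \<le> q" unfolding q_def using hT(2) Np by (intro divide_right_mono) auto
    have sg: "sgn g' * g' = \<bar>g'\<bar>" by (simp add: abs_sgn mult.commute)
    have "wt - w0 = (wv t - w0) * (1 - q) - (\<bar>g'\<bar> * w0 + sgn G * h') / N"
      unfolding wt_def q_def using Np sg hT(1)
      by (simp add: field_simps)
    then have "\<bar>wt - w0\<bar> \<le> \<bar>wv t - w0\<bar> * (1 - q) + \<bar>\<bar>g'\<bar> * w0 + sgn G * h'\<bar> / N"
      using q1 Np by (simp add: abs_mult abs_triangle_ineq4 order_trans[OF abs_triangle_ineq4])
    also have "\<bar>wv t - w0\<bar> * (1 - q) \<le> \<bar>wv t - w0\<bar> * (1 - (\<bar>G\<bar> / 2) / N)"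
      using q2 by (intro mult_left_mono) auto
    finally have A: "\<bar>wt - w0\<bar> \<le> (1 - (\<bar>G\<bar> / 2) / N) * u t + \<epsilon> t / N"
      unfolding u_def \<epsilon>_def g'_def h'_def by (simp add: mult.commute)
    have B: "u (Suc t) \<le> \<bar>wt - w0\<bar>"
    proof -
      have ws: "wv (Suc t) = (if \<bar>wt\<bar> < 2 then wt else 1/2)"
        unfolding rec[of t] wt_def g'_def h'_def N_def Let_def by simp
      show ?thesis
      proof (cases "\<bar>wt\<bar> < 2")
        case True then show ?thesis using ws unfolding u_def by simp
      next
        case False
        then show ?thesis using ws w0 unfolding u_def by (simp add: abs_if split: if_splits)
      qed
    qed
    show ?thesis using A B unfolding N_def by linarith
  qed
  have "u \<longlonglongrightarrow> 0"
    by (rule contr_seq[of u "\<bar>G\<bar> / 2" \<epsilon> T]) (use Gp eps rec_u in \<open>auto simp: u_def\<close>)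
  then have "(\<lambda>t. wv t - w0) \<longlonglongrightarrow> 0" unfolding u_def by (rule tendsto_rabs_zero_cancel)
  then show ?thesis by (simp add: Lim_null[symmetric])
qed


lemma sr_avg: "sr X t k = (\<Sum>s\<le>t. X s k) / real (Suc t)"
proof (induction t)
  case 0 then show ?case by simp
next
  case (Suc t)
  have "sr X (Suc t) k = real (Suc t) / real (Suc t + 1) * sr X t k + 1 / real (Suc t + 1) * X (Suc t) k"
    by simp
  also have "\<dots> = (\<Sum>s\<le>t. X s k) / real (Suc (Suc t)) + X (Suc t) k / real (Suc (Suc t))"
    unfolding Suc by simp
  also have "\<dots> = ((\<Sum>s\<le>t. X s k) + X (Suc t) k) / real (Suc (Suc t))"
    by (simp add: add_divide_distrib)
  also have "\<dots> = (\<Sum>s\<le>Suc t. X s k) / real (Suc (Suc t))" by simp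
  finally show ?case .
qed

locale gdet = gs n1 n2 S ws wd x0 for n1 n2 S ws wd x0 +
  fixes p :: "nat \<Rightarrow> nat \<times> nat"
  assumes pP: "\<And>t. p t \<in> P"
    and SL: "\<And>i. i \<notin> S \<Longrightarrow> i \<in> {1..n1+n2} \<Longrightarrow> (\<lambda>t. Sm i t p / real t) \<longlonglongrightarrow> 0"
    and Ssub: "S \<subseteq> {1..n1+n2}"
    and cR1: "card ({1..n1} - S) > 0" and cR2: "card ({n1+1..n1+n2} - S) > 0"
    and cS1: "card ({1..n1} \<inter> S) > 0" and cS2: "card ({n1+1..n1+n2} \<inter> S) > 0"
    and wsd: "ws \<noteq> wd"
    and avg: "(\<Sum>i\<in>{1..n1} \<inter> S. x0 i) / real (card ({1..n1} \<inter> S))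
         \<noteq> (\<Sum>i\<in>{n1+1..n1+n2} \<inter> S. x0 i) / real (card ({n1+1..n1+n2} \<inter> S))"
begin

definition "X = (\<lambda>t. traj S p x0 t)"
definition "R1 = {1..n1} - S"
definition "R2 = {n1+1..n1+n2} - S"
definition "S1 = {1..n1} \<inter> S"
definition "S2 = {n1+1..n1+n2} \<inter> S"
definition "\<sigma>1 = (\<Sum>i\<in>S1. x0 i)"
definition "\<sigma>2 = (\<Sum>i\<in>S2. x0 i)"
definition "d1 = ws * n1 + wd * n2"
definition "d2 = wd * n1 + ws * n2"

lemma X_tr: "X t = tr p t" unfolding X_def tr_def by simp

lemma X_stub: "k \<in> S \<Longrightarrow> X t k = x0 k"
  unfolding X_def by (rule traj_stub)

lemma sr_stub: "k \<in> S \<Longrightarrow> sr X t k = x0 k"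
  unfolding sr_avg X_stub by simp

lemma X_bound: "k \<in> {1..n1+n2} \<Longrightarrow> \<bar>X t k\<bar> \<le> B"
  unfolding X_tr using pP by (intro tr_bound) auto

lemma Lf_avg: "Lf i (sr X t) = (\<Sum>s\<le>t. Lf i (X s)) / real (Suc t)"
proof -
  have "Lf i (sr X t) = (\<Sum>j\<in>{1..n1+n2}. \<Sum>s\<le>t. wgt n1 ws wd i j * (X s j - X s i) / real (Suc t))"
    unfolding Lf_def sr_avg
    by (rule sum.cong[OF refl]) (simp add: sum_subtractf[symmetric] sum_distrib_left sum_divide_distrib[symmetric] diff_divide_distrib[symmetric])
  also have "\<dots> = (\<Sum>s\<le>t. \<Sum>j\<in>{1..n1+n2}. wgt n1 ws wd i j * (X s j - X s i) / real (Suc t))"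
    by (rule sum.swap)
  also have "\<dots> = (\<Sum>s\<le>t. Lf i (X s)) / real (Suc t)"
    unfolding Lf_def by (simp add: sum_divide_distrib)
  finally show ?thesis .
qed

lemma Lf_telescope: "(\<Sum>s<T. Lf i (X s)) = X T i - X 0 i - Sm i T p"
proof -
  have "Sm i T p = (\<Sum>s<T. X (Suc s) i - X s i) - (\<Sum>s<T. Lf i (X s))"
    unfolding Sm_def Yv_def X_tr by (simp add: sum_subtractf)
  also have "(\<Sum>s<T. X (Suc s) i - X s i) = X T i - X 0 i" by (rule sum_lessThan_telescope)
  finally show ?thesis by simp
qed

lemma Lf_lim:
  assumes reg: "i \<notin> S" "i \<in> {1..n1+n2}"
  shows "(\<lambda>t. Lf i (sr X t)) \<longlonglongrightarrow> 0"
proof -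
  have eq: "Lf i (sr X t) = (X (Suc t) i - X 0 i) / real (Suc t) - Sm i (Suc t) p / real (Suc t)" for t
  proof -
    have "(\<Sum>s\<le>t. Lf i (X s)) = (\<Sum>s<Suc t. Lf i (X s))" by (simp add: lessThan_Suc_atMost)
    then show ?thesis unfolding Lf_avg Lf_telescope by (simp add: diff_divide_distrib)
  qed
  have A: "(\<lambda>t. (X (Suc t) i - X 0 i) / real (Suc t)) \<longlonglongrightarrow> 0"
  proof (rule Lim_null_comparison)
    show "eventually (\<lambda>t. norm ((X (Suc t) i - X 0 i) / real (Suc t)) \<le> 2 * B * inverse (real (Suc t))) sequentially"
    proof (intro always_eventually allI)
      fix t
      have "\<bar>X (Suc t) i - X 0 i\<bar> \<le> 2 * B" using X_bound[OF reg(2), of "Suc t"] X_bound[OF reg(2), of 0] by linarith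
      then show "norm ((X (Suc t) i - X 0 i) / real (Suc t)) \<le> 2 * B * inverse (real (Suc t))"
        by (simp add: divide_inverse abs_mult mult_right_mono)
    qed
    show "(\<lambda>t. 2 * B * inverse (real (Suc t))) \<longlonglongrightarrow> 0"
      using tendsto_mult_left_zero[OF LIMSEQ_inverse_real_of_nat, of "2 * B"] by (simp add: mult.commute)
  qed
  have Bq: "(\<lambda>t. Sm i (Suc t) p / real (Suc t)) \<longlonglongrightarrow> 0"
    using LIMSEQ_Suc[OF SL[OF reg]] by simp
  have "(\<lambda>t. (X (Suc t) i - X 0 i) / real (Suc t) - Sm i (Suc t) p / real (Suc t)) \<longlonglongrightarrow> 0 - 0"
    by (intro tendsto_diff A Bq)
  then show ?thesis unfolding eq by simp
qed

lemma finR: "finite R1" "finite R2" "finite S1" "finite S2"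
  unfolding R1_def R2_def S1_def S2_def by auto

lemma sum_row1:
  assumes "i \<le> n1" and stub: "\<And>k. k \<in> S \<Longrightarrow> x k = x0 k"
  shows "Lf i x = ws * ((\<Sum>k\<in>R1. x k) + \<sigma>1) + wd * ((\<Sum>k\<in>R2. x k) + \<sigma>2) - d1 * x i"
proof -
  have "Lf i x = (\<Sum>j\<in>{1..n1+n2}. wgt n1 ws wd i j * x j) - (\<Sum>j\<in>{1..n1+n2}. wgt n1 ws wd i j) * x i"
    unfolding Lf_def by (simp add: algebra_simps sum_subtractf sum_distrib_right sum_distrib_left)
  also have "(\<Sum>j\<in>{1..n1+n2}. wgt n1 ws wd i j) = d1" unfolding row_sum d1_def using assms by simp
  also have "(\<Sum>j\<in>{1..n1+n2}. wgt n1 ws wd i j * x j) = ws * (\<Sum>j\<in>{1..n1}. x j) + wd * (\<Sum>j\<in>{n1+1..n1+n2}. x j)"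
    unfolding sum_split_n using assms by (simp add: wgt_def comm_def sum_distrib_left)
  also have "(\<Sum>j\<in>{1..n1}. x j) = (\<Sum>k\<in>R1. x k) + \<sigma>1"
    unfolding R1_def \<sigma>1_def S1_def using sum.Int_Diff[of "{1..n1}" x S] stub by simp
  also have "(\<Sum>j\<in>{n1+1..n1+n2}. x j) = (\<Sum>k\<in>R2. x k) + \<sigma>2"
    unfolding R2_def \<sigma>2_def S2_def using sum.Int_Diff[of "{n1+1..n1+n2}" x S] stub by simp
  finally show ?thesis .
qed

lemma sum_row2:
  assumes "i > n1" and stub: "\<And>k. k \<in> S \<Longrightarrow> x k = x0 k"
  shows "Lf i x = wd * ((\<Sum>k\<in>R1. x k) + \<sigma>1) + ws * ((\<Sum>k\<in>R2. x k) + \<sigma>2) - d2 * x i"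
proof -
  have "Lf i x = (\<Sum>j\<in>{1..n1+n2}. wgt n1 ws wd i j * x j) - (\<Sum>j\<in>{1..n1+n2}. wgt n1 ws wd i j) * x i"
    unfolding Lf_def by (simp add: algebra_simps sum_subtractf sum_distrib_right sum_distrib_left)
  also have "(\<Sum>j\<in>{1..n1+n2}. wgt n1 ws wd i j) = d2" unfolding row_sum d2_def using assms by simp
  also have "(\<Sum>j\<in>{1..n1+n2}. wgt n1 ws wd i j * x j) = wd * (\<Sum>j\<in>{1..n1}. x j) + ws * (\<Sum>j\<in>{n1+1..n1+n2}. x j)"
    unfolding sum_split_n using assms by (simp add: wgt_def comm_def sum_distrib_left)
  also have "(\<Sum>j\<in>{1..n1}. x j) = (\<Sum>k\<in>R1. x k) + \<sigma>1"
    unfolding R1_def \<sigma>1_def S1_def using sum.Int_Diff[of "{1..n1}" x S] stub by simp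
  also have "(\<Sum>j\<in>{n1+1..n1+n2}. x j) = (\<Sum>k\<in>R2. x k) + \<sigma>2"
    unfolding R2_def \<sigma>2_def S2_def using sum.Int_Diff[of "{n1+1..n1+n2}" x S] stub by simp
  finally show ?thesis .
qed

end


context gdet begin

definition "nr1 = real (card R1)"
definition "nr2 = real (card R2)"
definition "ns1 = real (card S1)"
definition "ns2 = real (card S2)"
definition "u1 t = (\<Sum>k\<in>R1. sr X t k)" for t
definition "u2 t = (\<Sum>k\<in>R2. sr X t k)" for t
definition "al11 = nr1 * ws - d1"
definition "al12 = nr1 * wd"
definition "k1 = nr1 * (ws * \<sigma>1 + wd * \<sigma>2)"
definition "al21 = nr2 * wd"
definition "al22 = nr2 * ws - d2"
definition "k2 = nr2 * (wd * \<sigma>1 + ws * \<sigma>2)"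
definition "dtm = al11 * al22 - al12 * al21"
definition "u1s = (al22 * (0 - k1) - al12 * (0 - k2)) / dtm"
definition "u2s = (al11 * (0 - k2) - al21 * (0 - k1)) / dtm"
definition "aL = (ws * (u1s + \<sigma>1) + wd * (u2s + \<sigma>2)) / d1"
definition "bL = (wd * (u1s + \<sigma>1) + ws * (u2s + \<sigma>2)) / d2"

lemma card1: "nr1 + ns1 = real n1"
proof -
  have "card {1..n1} = card ({1..n1} \<inter> S) + card ({1..n1} - S)" by (rule card_Int_Diff) auto
  then show ?thesis unfolding nr1_def ns1_def R1_def S1_def by simp
qed

lemma card2: "nr2 + ns2 = real n2"
proof -
  have "card {n1+1..n1+n2} = card ({n1+1..n1+n2} \<inter> S) + card ({n1+1..n1+n2} - S)" by (rule card_Int_Diff) auto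
  then show ?thesis unfolding nr2_def ns2_def R2_def S2_def by simp
qed

lemma poss: "nr1 > 0" "nr2 > 0" "ns1 > 0" "ns2 > 0"
  unfolding nr1_def nr2_def ns1_def ns2_def R1_def R2_def S1_def S2_def using cR1 cR2 cS1 cS2 by auto

lemma d_pos: "d1 > 0" "d2 > 0"
proof -
  have "real n1 > 0" "real n2 > 0" using card1 card2 poss by linarith+
  then show "d1 > 0" "d2 > 0" unfolding d1_def d2_def using ws_pos wd_pos by (auto intro: add_pos_pos)
qed

lemma R1_reg: "i \<in> R1 \<Longrightarrow> i \<notin> S \<and> i \<in> {1..n1+n2} \<and> i \<le> n1" unfolding R1_def by auto
lemma R2_reg: "i \<in> R2 \<Longrightarrow> i \<notin> S \<and> i \<in> {1..n1+n2} \<and> i > n1" unfolding R2_def by auto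

lemma e1_eq: "(\<Sum>i\<in>R1. Lf i (sr X t)) = al11 * u1 t + al12 * u2 t + k1"
proof -
  have "(\<Sum>i\<in>R1. Lf i (sr X t)) = (\<Sum>i\<in>R1. (ws * (u1 t + \<sigma>1) + wd * (u2 t + \<sigma>2)) - d1 * sr X t i)"
    using R1_reg sr_stub unfolding u1_def u2_def by (intro sum.cong refl sum_row1) auto
  also have "\<dots> = nr1 * (ws * (u1 t + \<sigma>1) + wd * (u2 t + \<sigma>2)) - d1 * u1 t"
    unfolding nr1_def u1_def by (simp add: sum_subtractf sum_distrib_left)
  finally show ?thesis unfolding al11_def al12_def k1_def by (simp add: algebra_simps)
qed

lemma e2_eq: "(\<Sum>i\<in>R2. Lf i (sr X t)) = al21 * u1 t + al22 * u2 t + k2"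
proof -
  have "(\<Sum>i\<in>R2. Lf i (sr X t)) = (\<Sum>i\<in>R2. (wd * (u1 t + \<sigma>1) + ws * (u2 t + \<sigma>2)) - d2 * sr X t i)"
    using R2_reg sr_stub unfolding u1_def u2_def by (intro sum.cong refl sum_row2) auto
  also have "\<dots> = nr2 * (wd * (u1 t + \<sigma>1) + ws * (u2 t + \<sigma>2)) - d2 * u2 t"
    unfolding nr2_def u2_def by (simp add: sum_subtractf sum_distrib_left)
  finally show ?thesis unfolding al21_def al22_def k2_def by (simp add: algebra_simps)
qed

lemma e1_lim: "(\<lambda>t. al11 * u1 t + al12 * u2 t + k1) \<longlonglongrightarrow> 0"
  unfolding e1_eq[symmetric] using R1_reg Lf_lim by (intro tendsto_null_sum) auto

lemma e2_lim: "(\<lambda>t. al21 * u1 t + al22 * u2 t + k2) \<longlonglongrightarrow> 0"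
  unfolding e2_eq[symmetric] using R2_reg Lf_lim by (intro tendsto_null_sum) auto

lemma dtm_pos: "dtm > 0"
proof -
  define P1 where "P1 = ws * ns1 + wd * real n2"
  define P2 where "P2 = ws * ns2 + wd * real n1"
  have "al11 = - P1" unfolding al11_def P1_def d1_def using card1 by (simp add: algebra_simps flip: card1)
  moreover have "al22 = - P2" unfolding al22_def P2_def d2_def by (simp add: algebra_simps flip: card2)
  moreover have "P1 > wd * nr2"
  proof -
    have "P1 - wd * nr2 = ws * ns1 + wd * ns2" unfolding P1_def by (simp add: algebra_simps flip: card2)
    moreover have "ws * ns1 + wd * ns2 > 0" using poss ws_pos wd_pos by (intro add_pos_pos mult_pos_pos) auto
    ultimately show ?thesis by simp
  qed
  moreover have "P2 > wd * nr1"
  proof -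
    have "P2 - wd * nr1 = ws * ns2 + wd * ns1" unfolding P2_def by (simp add: algebra_simps flip: card1)
    moreover have "ws * ns2 + wd * ns1 > 0" using poss ws_pos wd_pos by (intro add_pos_pos mult_pos_pos) auto
    ultimately show ?thesis by simp
  qed
  moreover have "wd * nr1 \<ge> 0" "wd * nr2 \<ge> 0" using poss wd_pos by auto
  ultimately have "P1 * P2 > (wd * nr2) * (wd * nr1)" by (intro mult_strict_mono) auto
  moreover have "dtm = P1 * P2 - (wd * nr2) * (wd * nr1)"
    unfolding dtm_def al12_def al21_def \<open>al11 = - P1\<close> \<open>al22 = - P2\<close> by (simp add: algebra_simps)
  ultimately show ?thesis by simp
qed

definition "f1 t = al11 * u1 t + al12 * u2 t + k1" for t
definition "f2 t = al21 * u1 t + al22 * u2 t + k2" for t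

lemma f1_lim: "f1 \<longlonglongrightarrow> 0" unfolding f1_def using e1_lim by simp
lemma f2_lim: "f2 \<longlonglongrightarrow> 0" unfolding f2_def using e2_lim by simp

lemma u1_lim: "u1 \<longlonglongrightarrow> u1s"
proof -
  have eq: "u1 = (\<lambda>t. (al22 * (f1 t - k1) - al12 * (f2 t - k2)) / dtm)"
    using dtm_pos unfolding dtm_def f1_def f2_def by (intro ext) (simp add: field_simps)
  have "(\<lambda>t. (al22 * (f1 t - k1) - al12 * (f2 t - k2)) / dtm) \<longlonglongrightarrow> (al22 * (0 - k1) - al12 * (0 - k2)) / dtm"
    by (intro tendsto_divide tendsto_diff tendsto_mult tendsto_const f1_lim f2_lim) (use dtm_pos in simp)
  then show ?thesis unfolding eq u1s_def .
qed

lemma u2_lim: "u2 \<longlonglongrightarrow> u2s"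
proof -
  have eq: "u2 = (\<lambda>t. (al11 * (f2 t - k2) - al21 * (f1 t - k1)) / dtm)"
    using dtm_pos unfolding dtm_def f1_def f2_def by (intro ext) (simp add: field_simps)
  have "(\<lambda>t. (al11 * (f2 t - k2) - al21 * (f1 t - k1)) / dtm) \<longlonglongrightarrow> (al11 * (0 - k2) - al21 * (0 - k1)) / dtm"
    by (intro tendsto_divide tendsto_diff tendsto_mult tendsto_const f1_lim f2_lim) (use dtm_pos in simp)
  then show ?thesis unfolding eq u2s_def .
qed

lemma lim_R1: assumes "i \<in> R1" shows "(\<lambda>t. sr X t i) \<longlonglongrightarrow> aL"
proof -
  have eq: "sr X t i = (ws * (u1 t + \<sigma>1) + wd * (u2 t + \<sigma>2) - Lf i (sr X t)) / d1" for t
  proof -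
    have r: "Lf i (sr X t) = ws * (u1 t + \<sigma>1) + wd * (u2 t + \<sigma>2) - d1 * sr X t i"
      unfolding u1_def u2_def using R1_reg[OF assms] sr_stub by (intro sum_row1) auto
    show ?thesis using r d_pos(1) by (simp add: field_simps)
  qed
  have "(\<lambda>t. (ws * (u1 t + \<sigma>1) + wd * (u2 t + \<sigma>2) - Lf i (sr X t)) / d1)
      \<longlonglongrightarrow> (ws * (u1s + \<sigma>1) + wd * (u2s + \<sigma>2) - 0) / d1"
    using R1_reg[OF assms] d_pos by (intro tendsto_intros u1_lim u2_lim Lf_lim) auto
  then show ?thesis unfolding eq aL_def by simp
qed

lemma lim_R2: assumes "i \<in> R2" shows "(\<lambda>t. sr X t i) \<longlonglongrightarrow> bL"
proof -
  have eq: "sr X t i = (wd * (u1 t + \<sigma>1) + ws * (u2 t + \<sigma>2) - Lf i (sr X t)) / d2" for t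
  proof -
    have r: "Lf i (sr X t) = wd * (u1 t + \<sigma>1) + ws * (u2 t + \<sigma>2) - d2 * sr X t i"
      unfolding u1_def u2_def using R2_reg[OF assms] sr_stub by (intro sum_row2) auto
    show ?thesis using r d_pos(2) by (simp add: field_simps)
  qed
  have "(\<lambda>t. (wd * (u1 t + \<sigma>1) + ws * (u2 t + \<sigma>2) - Lf i (sr X t)) / d2)
      \<longlonglongrightarrow> (wd * (u1s + \<sigma>1) + ws * (u2s + \<sigma>2) - 0) / d2"
    using R2_reg[OF assms] d_pos by (intro tendsto_intros u1_lim u2_lim Lf_lim) auto
  then show ?thesis unfolding eq bL_def by simp
qed

lemma u1s_eq: "u1s = nr1 * aL"
proof -
  have "u1 \<longlonglongrightarrow> (\<Sum>k\<in>R1. aL)" unfolding u1_def by (intro tendsto_sum lim_R1)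
  then show ?thesis using u1_lim LIMSEQ_unique unfolding nr1_def by fastforce
qed

lemma u2s_eq: "u2s = nr2 * bL"
proof -
  have "u2 \<longlonglongrightarrow> (\<Sum>k\<in>R2. bL)" unfolding u2_def by (intro tendsto_sum lim_R2)
  then show ?thesis using u2_lim LIMSEQ_unique unfolding nr2_def by fastforce
qed

lemma Eq1: "(ws * ns1 + wd * real n2) * aL = wd * nr2 * bL + ws * \<sigma>1 + wd * \<sigma>2"
proof -
  have "d1 * aL = ws * (u1s + \<sigma>1) + wd * (u2s + \<sigma>2)"
    using d_pos unfolding aL_def by simp
  then have "d1 * aL = ws * (nr1 * aL + \<sigma>1) + wd * (nr2 * bL + \<sigma>2)"
    using u1s_eq u2s_eq by simp
  then show ?thesis unfolding d1_def by (simp add: algebra_simps flip: card1)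
qed

lemma Eq2: "(ws * ns2 + wd * real n1) * bL = wd * nr1 * aL + ws * \<sigma>2 + wd * \<sigma>1"
proof -
  have "d2 * bL = wd * (u1s + \<sigma>1) + ws * (u2s + \<sigma>2)"
    using d_pos unfolding bL_def by simp
  then have "d2 * bL = wd * (nr1 * aL + \<sigma>1) + ws * (nr2 * bL + \<sigma>2)"
    using u1s_eq u2s_eq by simp
  then show ?thesis unfolding d2_def by (simp add: algebra_simps flip: card2)
qed

lemma avg': "\<sigma>1 / ns1 \<noteq> \<sigma>2 / ns2"
  using avg unfolding \<sigma>1_def \<sigma>2_def ns1_def ns2_def S1_def S2_def .

lemma aL_ne_bL: "aL \<noteq> bL"
proof
  assume ab: "aL = bL"
  define D1 where "D1 = ns1 * aL - \<sigma>1"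
  define D2 where "D2 = ns2 * aL - \<sigma>2"
  have h1: "ws * D1 + wd * D2 = 0"
    using Eq1 ab unfolding D1_def D2_def by (simp add: algebra_simps flip: card2)
  have h2: "ws * D2 + wd * D1 = 0"
    using Eq2 ab unfolding D1_def D2_def by (simp add: algebra_simps flip: card1)
  have "(ws - wd) * (ws + wd) * D1 = ws * (ws * D1 + wd * D2) - wd * (ws * D2 + wd * D1)"
    by (simp add: algebra_simps)
  also have "\<dots> = 0" using h1 h2 by simp
  finally have "D1 = 0" using wsd ws_pos wd_pos by simp
  then have "D2 = 0" using h1 wd_pos by simp
  have "\<sigma>1 / ns1 = aL" using \<open>D1 = 0\<close> poss unfolding D1_def by (simp add: field_simps)
  moreover have "\<sigma>2 / ns2 = aL" using \<open>D2 = 0\<close> poss unfolding D2_def by (simp add: field_simps)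
  ultimately show False using avg' by simp
qed

end


locale gdet2 = gdet n1 n2 S ws wd x0 p for n1 n2 S ws wd x0 p +
  fixes j :: "nat \<Rightarrow> nat" and C0 :: "nat \<Rightarrow> nat" and ws0 wd0 :: real
  assumes jprop: "\<And>i. i \<in> S \<Longrightarrow> j i \<in> {1..n1+n2} - S \<and> comm n1 (j i) = comm n1 i"
begin

definition "sb t = sbar (n1+n2) S X t" for t
definition "mL = (nr1 * aL + nr2 * bL) / (nr1 + nr2)"

lemma Vreg_eq: "Vreg (n1+n2) S = R1 \<union> R2"
  unfolding Vreg_def R1_def R2_def by auto

lemma R12_disj: "R1 \<inter> R2 = {}" unfolding R1_def R2_def by auto

lemma sb_lim: "sb \<longlonglongrightarrow> mL"
proof -
  have eq: "sb t = (u1 t + u2 t) / (nr1 + nr2)" for t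
  proof -
    have "(\<Sum>i\<in>Vreg (n1+n2) S. sr X t i) = u1 t + u2 t"
      unfolding Vreg_eq u1_def u2_def using finR R12_disj by (simp add: sum.union_disjoint)
    moreover have "real (card (Vreg (n1+n2) S)) = nr1 + nr2"
      unfolding Vreg_eq nr1_def nr2_def using finR R12_disj by (simp add: card_Un_disjoint)
    ultimately show ?thesis unfolding sb_def sbar_def by simp
  qed
  have "(\<lambda>t. (u1 t + u2 t) / (nr1 + nr2)) \<longlonglongrightarrow> (u1s + u2s) / (nr1 + nr2)"
    using poss by (intro tendsto_intros u1_lim u2_lim) auto
  then show ?thesis unfolding eq mL_def u1s_eq u2s_eq .
qed

lemma gap1: "aL - mL = nr2 * (aL - bL) / (nr1 + nr2)"
  unfolding mL_def using poss by (simp add: field_simps)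
lemma gap2: "bL - mL = nr1 * (bL - aL) / (nr1 + nr2)"
  unfolding mL_def using poss by (simp add: field_simps)

definition "c1 = (if bL < aL then 1 else 2 :: nat)"
definition "c2 = (if bL < aL then 2 else 1 :: nat)"
definition "lab i = (if i \<le> n1 then c1 else c2)" for i
definition "pi0 = (if bL < aL then id else Transposition.transpose (1::nat) 2)"

lemma pi0_perm: "pi0 permutes {1, 2}"
  unfolding pi0_def by (auto intro: permutes_swap_id)

lemma pi0_lab: "pi0 (comm n1 i) = lab i"
  unfolding pi0_def lab_def comm_def c1_def c2_def by auto

lemma cmp_R1: "eventually (\<lambda>t. \<forall>i\<in>R1. (sr X t i > sb t) = (bL < aL)) sequentially"
proof (rule eventually_ball_finite[OF finR(1)], intro ballI)
  fix i assume i: "i \<in> R1"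
  have L: "(\<lambda>t. sr X t i - sb t) \<longlonglongrightarrow> aL - mL" by (intro tendsto_intros lim_R1 i sb_lim)
  show "eventually (\<lambda>t. (sr X t i > sb t) = (bL < aL)) sequentially"
  proof (cases "bL < aL")
    case True
    then have "aL - mL > 0" unfolding gap1 using poss by (intro divide_pos_pos mult_pos_pos) auto
    from order_tendstoD(1)[OF L this] show ?thesis by eventually_elim (use True in auto)
  next
    case False
    then have "aL < bL" using aL_ne_bL by auto
    then have "aL - mL < 0" unfolding gap1 using poss by (intro divide_neg_pos mult_pos_neg) auto
    from order_tendstoD(2)[OF L this] show ?thesis by eventually_elim (use False in auto)
  qed
qed

lemma cmp_R2: "eventually (\<lambda>t. \<forall>i\<in>R2. (sr X t i > sb t) = (\<not> bL < aL)) sequentially"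
proof (rule eventually_ball_finite[OF finR(2)], intro ballI)
  fix i assume i: "i \<in> R2"
  have L: "(\<lambda>t. sr X t i - sb t) \<longlonglongrightarrow> bL - mL" by (intro tendsto_intros lim_R2 i sb_lim)
  show "eventually (\<lambda>t. (sr X t i > sb t) = (\<not> bL < aL)) sequentially"
  proof (cases "bL < aL")
    case True
    then have "bL - mL < 0" unfolding gap2 using poss by (intro divide_neg_pos mult_pos_neg) auto
    from order_tendstoD(2)[OF L this] show ?thesis by eventually_elim (use True in auto)
  next
    case False
    then have "aL < bL" using aL_ne_bL by auto
    then have "bL - mL > 0" unfolding gap2 using poss by (intro divide_pos_pos mult_pos_pos) auto
    from order_tendstoD(1)[OF L this] show ?thesis by eventually_elim (use False in auto)
  qed
qed

lemma detect: "eventually (\<lambda>t. \<forall>i\<in>{1..n1+n2}. Chat (n1+n2) S j C0 X t i = lab i) sequentially"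
proof -
  have "eventually (\<lambda>t. t > 0) sequentially" by (rule eventually_gt_at_top)
  with cmp_R1 cmp_R2 show ?thesis
  proof eventually_elim
    case (elim t)
    have reg: "Chat (n1+n2) S j C0 X t i = lab i" if i: "i \<in> {1..n1+n2}" "i \<notin> S" for i
    proof (cases "i \<le> n1")
      case True
      then have "i \<in> R1" using i unfolding R1_def by auto
      then show ?thesis using elim i True unfolding Chat_def lab_def c1_def sb_def by auto
    next
      case False
      then have "i \<in> R2" using i unfolding R2_def by auto
      then show ?thesis using elim i False unfolding Chat_def lab_def c2_def sb_def by auto
    qed
    show ?case
    proof
      fix i assume i: "i \<in> {1..n1+n2}"
      show "Chat (n1+n2) S j C0 X t i = lab i"
      proof (cases "i \<in> S")
        case False then show ?thesis using reg i by auto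
      next
        case True
        have ji: "j i \<in> {1..n1+n2}" "j i \<notin> S" "comm n1 (j i) = comm n1 i" using jprop[OF True] by auto
        have "lab (j i) = lab i" using ji(3) unfolding lab_def comm_def by (auto split: if_splits)
        moreover have "Chat (n1+n2) S j C0 X t i = Chat (n1+n2) S j C0 X t (j i)"
          using True ji elim unfolding Chat_def by auto
        ultimately show ?thesis using reg[OF ji(1,2)] by simp
      qed
    qed
  qed
qed

end


context gdet2 begin

lemma PE:
  fixes Ra Sa Rb Sb :: "nat set" and Na Nb :: nat and A Bv :: real
  defines "N \<equiv> n1 + n2"
  assumes ev: "eventually (\<lambda>t. hVr N S j C0 X t 1 = Ra \<and> hVs N S j C0 X t 1 = Sa
       \<and> hVr N S j C0 X t 2 = Rb \<and> hVs N S j C0 X t 2 = Sb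
       \<and> nhat N S j C0 X t 1 = real Na \<and> nhat N S j C0 X t 2 = real Nb) sequentially"
    and limA: "\<And>i. i \<in> Ra \<Longrightarrow> (\<lambda>t. sr X t i) \<longlonglongrightarrow> A"
    and limB: "\<And>i. i \<in> Rb \<Longrightarrow> (\<lambda>t. sr X t i) \<longlonglongrightarrow> Bv"
    and sub: "Sa \<subseteq> S" "Sb \<subseteq> S"
    and fin: "finite Ra" "finite Rb" "finite Sa" "finite Sb"
    and cards: "card Ra > 0" "card Sa > 0" "card Sb > 0"
       "Na = card Ra + card Sa" "Nb = card Rb + card Sb"
    and Ea: "(ws * card Sa + wd * Nb) * A = wd * card Rb * Bv + ws * (\<Sum>i\<in>Sa. x0 i) + wd * (\<Sum>i\<in>Sb. x0 i)"
    and Eb: "(ws * card Sb + wd * Na) * Bv = wd * card Ra * A + ws * (\<Sum>i\<in>Sb. x0 i) + wd * (\<Sum>i\<in>Sa. x0 i)"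
    and avgd: "(\<Sum>i\<in>Sa. x0 i) / card Sa \<noteq> (\<Sum>i\<in>Sb. x0 i) / card Sb"
    and nrm: "ws * (real Na ^ 2 + real Nb ^ 2) + 2 * wd * real Na * real Nb = 1"
  shows "(\<lambda>t. ws_hat N S j C0 ws0 X t) \<longlonglongrightarrow> ws \<and> (\<lambda>t. wd_hat N S j C0 ws0 wd0 X t) \<longlonglongrightarrow> wd"
proof -
  define \<sigma>a where "\<sigma>a = (\<Sum>i\<in>Sa. x0 i)"
  define \<sigma>b where "\<sigma>b = (\<Sum>i\<in>Sb. x0 i)"
  define ra where "ra = real (card Ra)"
  define rb where "rb = real (card Rb)"
  define sa where "sa = real (card Sa)"
  define sbb where "sbb = real (card Sb)"
  have rapos: "ra > 0" "sa > 0" "sbb > 0" using cards unfolding ra_def sa_def sbb_def by auto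
  have NaNb: "real Na = ra + sa" "real Nb = rb + sbb" using cards unfolding ra_def rb_def sa_def sbb_def by auto
  have Napos: "real Na > 0" "real Nb > 0" using NaNb rapos rb_def by auto
  have sumX: "(\<Sum>i\<in>Sa. X t i) = \<sigma>a" "(\<Sum>i\<in>Sb. X t i) = \<sigma>b" for t
    unfolding \<sigma>a_def \<sigma>b_def using sub by (auto intro!: sum.cong X_stub)
  have UA: "(\<lambda>t. \<Sum>i\<in>Ra. sr X t i) \<longlonglongrightarrow> ra * A" unfolding ra_def
    using tendsto_sum[of Ra "\<lambda>i t. sr X t i" "\<lambda>_. A" sequentially] limA by simp
  have UB: "(\<lambda>t. \<Sum>i\<in>Rb. sr X t i) \<longlonglongrightarrow> rb * Bv" unfolding rb_def
    using tendsto_sum[of Rb "\<lambda>i t. sr X t i" "\<lambda>_. Bv" sequentially] limB by simp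
  define B1 where "B1 = sa * A - \<sigma>a"
  define B2 where "B2 = real Nb * A - rb * Bv - \<sigma>b"
  define cc where "cc = (real Na ^ 2 + real Nb ^ 2) / (2 * real Na * real Nb)"
  define G where "G = B1 - cc * B2"
  define Hh where "Hh = B2 / (2 * real Na * real Nb)"
  have b1: "(\<lambda>t. beta1 N S j C0 X t) \<longlonglongrightarrow> B1"
  proof (rule Lim_transform_eventually)
    show "(\<lambda>t. sa / ra * (\<Sum>i\<in>Ra. sr X t i) - \<sigma>a) \<longlonglongrightarrow> B1"
      using tendsto_diff[OF tendsto_mult[OF tendsto_const UA, of "sa / ra"] tendsto_const[of \<sigma>a]] rapos
      unfolding B1_def by simp
    show "eventually (\<lambda>t. sa / ra * (\<Sum>i\<in>Ra. sr X t i) - \<sigma>a = beta1 N S j C0 X t) sequentially"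
      using ev by eventually_elim (simp add: beta1_def sa_def ra_def sumX)
  qed
  have b2: "(\<lambda>t. beta2 N S j C0 X t) \<longlonglongrightarrow> B2"
  proof (rule Lim_transform_eventually)
    show "(\<lambda>t. real Nb / ra * (\<Sum>i\<in>Ra. sr X t i) - (\<Sum>i\<in>Rb. sr X t i) - \<sigma>b) \<longlonglongrightarrow> B2"
      using tendsto_diff[OF tendsto_diff[OF tendsto_mult[OF tendsto_const UA, of "real Nb / ra"] UB] tendsto_const[of \<sigma>b]] rapos
      unfolding B2_def by simp
    show "eventually (\<lambda>t. real Nb / ra * (\<Sum>i\<in>Ra. sr X t i) - (\<Sum>i\<in>Rb. sr X t i) - \<sigma>b = beta2 N S j C0 X t) sequentially"
      using ev by eventually_elim (simp add: beta2_def ra_def sumX)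
  qed
  have gl: "(\<lambda>t. gfun N S j C0 X t) \<longlonglongrightarrow> G"
  proof (rule Lim_transform_eventually)
    show "(\<lambda>t. beta1 N S j C0 X t - cc * beta2 N S j C0 X t) \<longlonglongrightarrow> G"
      unfolding G_def by (intro tendsto_intros b1 b2)
    show "eventually (\<lambda>t. beta1 N S j C0 X t - cc * beta2 N S j C0 X t = gfun N S j C0 X t) sequentially"
      using ev by eventually_elim (simp add: gfun_def cc_def)
  qed
  have hl: "(\<lambda>t. beta2 N S j C0 X t / (2 * nhat N S j C0 X t 1 * nhat N S j C0 X t 2)) \<longlonglongrightarrow> Hh"
  proof (rule Lim_transform_eventually)
    show "(\<lambda>t. beta2 N S j C0 X t / (2 * real Na * real Nb)) \<longlonglongrightarrow> Hh"
      unfolding Hh_def using Napos by (intro tendsto_intros b2) auto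
    show "eventually (\<lambda>t. beta2 N S j C0 X t / (2 * real Na * real Nb) =
        beta2 N S j C0 X t / (2 * nhat N S j C0 X t 1 * nhat N S j C0 X t 2)) sequentially"
      using ev by eventually_elim simp
  qed
  have wdeq: "wd = (1 - ws * (real Na ^ 2 + real Nb ^ 2)) / (2 * real Na * real Nb)"
    using nrm Napos by (simp add: field_simps)
  have key: "ws * B1 + wd * B2 = 0"
    using Ea unfolding B1_def B2_def \<sigma>a_def[symmetric] \<sigma>b_def[symmetric] sa_def[symmetric] rb_def[symmetric]
    by (simp add: algebra_simps)
  have eq0: "G * ws + Hh = 0"
  proof -
    have "G * ws + Hh = ws * B1 + B2 * ((1 - ws * (real Na ^ 2 + real Nb ^ 2)) / (2 * real Na * real Nb))"
      unfolding G_def Hh_def cc_def using Napos by (simp add: field_simps)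
    also have "\<dots> = ws * B1 + wd * B2" by (simp add: wdeq mult.commute)
    finally show ?thesis using key by simp
  qed
  have Gne: "G \<noteq> 0"
  proof
    assume G0: "G = 0"
    then have "Hh = 0" using eq0 by simp
    then have B20: "B2 = 0" unfolding Hh_def using Napos by simp
    then have B10: "B1 = 0" using G0 unfolding G_def by simp
    have s2: "\<sigma>b = real Nb * A - rb * Bv" using B20 unfolding B2_def by simp
    have s1: "\<sigma>a = sa * A" using B10 unfolding B1_def by simp
    have "(ws * sbb + wd * real Na) * Bv = wd * ra * A + ws * \<sigma>b + wd * \<sigma>a"
      using Eb unfolding \<sigma>a_def[symmetric] \<sigma>b_def[symmetric] sbb_def[symmetric] ra_def[symmetric] .
    then have "(ws * real Nb + wd * real Na) * (Bv - A) = 0"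
      unfolding s1 s2 NaNb by (simp add: algebra_simps)
    moreover have "ws * real Nb + wd * real Na > 0" using Napos ws_pos wd_pos by (intro add_pos_pos mult_pos_pos)
    ultimately have AB: "Bv = A" by simp
    then have "\<sigma>b = sbb * A" using s2 NaNb by (simp add: algebra_simps)
    then have "\<sigma>a / sa = \<sigma>b / sbb" using s1 rapos by simp
    then show False using avgd unfolding \<sigma>a_def \<sigma>b_def sa_def sbb_def by simp
  qed
  have ws34: "\<bar>ws\<bar> \<le> 3/4"
  proof -
    have "real Na \<ge> 1" "real Nb \<ge> 1" using cards by auto
    then have "real Na ^ 2 \<ge> 1" "real Nb ^ 2 \<ge> 1" by auto
    moreover have "2 * wd * real Na * real Nb \<ge> 0" using wd_pos Napos by simp
    moreover have "ws * 2 \<le> ws * (real Na ^ 2 + real Nb ^ 2)"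
      using calculation(1,2) ws_pos by (intro mult_left_mono) auto
    ultimately have "ws * 2 \<le> 1" using nrm by linarith
    then show ?thesis using ws_pos by simp
  qed
  have wsl: "(\<lambda>t. ws_hat N S j C0 ws0 X t) \<longlonglongrightarrow> ws"
    by (rule rm[OF _ gl Gne hl eq0 ws34]) (simp add: Let_def)
  have "(\<lambda>t. (1 - (real Na ^ 2 + real Nb ^ 2) * ws_hat N S j C0 ws0 X t) / (2 * real Na * real Nb))
      \<longlonglongrightarrow> (1 - (real Na ^ 2 + real Nb ^ 2) * ws) / (2 * real Na * real Nb)"
    using Napos by (intro tendsto_intros wsl) auto
  then have "(\<lambda>t. (1 - (real Na ^ 2 + real Nb ^ 2) * ws_hat N S j C0 ws0 X t) / (2 * real Na * real Nb)) \<longlonglongrightarrow> wd"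
    using wdeq by (simp add: mult.commute)
  then have wdl: "(\<lambda>t. wd_hat N S j C0 ws0 wd0 X t) \<longlonglongrightarrow> wd"
  proof (rule Lim_transform_eventually)
    show "eventually (\<lambda>t. (1 - (real Na ^ 2 + real Nb ^ 2) * ws_hat N S j C0 ws0 X t) / (2 * real Na * real Nb)
       = wd_hat N S j C0 ws0 wd0 X t) sequentially"
      using eventually_conj[OF ev eventually_gt_at_top[of 0]] by eventually_elim (simp add: wd_hat_def)
  qed
  show ?thesis using wsl wdl by simp
qed

end


context gdet2 begin

lemma det_part1: "\<exists>T \<pi>. \<pi> permutes {1::nat, 2} \<and>
   (\<forall>i\<in>{1..n1+n2}. \<forall>t\<ge>T. Chat (n1+n2) S j C0 X t i = \<pi> (comm n1 i))"
proof -
  obtain T where T: "\<And>t. t \<ge> T \<Longrightarrow> \<forall>i\<in>{1..n1+n2}. Chat (n1+n2) S j C0 X t i = lab i"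
    using detect unfolding eventually_sequentially by blast
  show ?thesis using pi0_perm T pi0_lab by (intro exI[of _ T] exI[of _ pi0]) auto
qed

lemma cardsN: "card R1 + card S1 = n1" "card R2 + card S2 = n2"
  using card1 card2 unfolding nr1_def nr2_def ns1_def ns2_def by linarith+

lemma set_facts:
  "{i\<in>{1..n1+n2}. i \<le> n1} = {1..n1}" "{i\<in>{1..n1+n2}. \<not> i \<le> n1} = {n1+1..n1+n2}"
  "{i\<in>Vreg (n1+n2) S. i \<le> n1} = R1" "{i\<in>Vreg (n1+n2) S. \<not> i \<le> n1} = R2"
  "{i\<in>S. i \<le> n1} = S1" "{i\<in>S. \<not> i \<le> n1} = S2"
  unfolding Vreg_def R1_def R2_def S1_def S2_def using Ssub by auto

lemma ifs: "{i\<in>A. (if i \<le> n1 then 1 else 2::nat) = 1} = {i\<in>A. i \<le> n1}"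
  "{i\<in>A. (if i \<le> n1 then 1 else 2::nat) = 2} = {i\<in>A. \<not> i \<le> n1}"
  "{i\<in>A. (if i \<le> n1 then 2 else 1::nat) = 1} = {i\<in>A. \<not> i \<le> n1}"
  "{i\<in>A. (if i \<le> n1 then 2 else 1::nat) = 2} = {i\<in>A. i \<le> n1}"
  by auto

lemma labsets:
  assumes "\<forall>i\<in>{1..n1+n2}. Chat (n1+n2) S j C0 X t i = lab i"
  shows "hVr (n1+n2) S j C0 X t k = {i\<in>Vreg (n1+n2) S. lab i = k}"
    "hVs (n1+n2) S j C0 X t k = {i\<in>S. lab i = k}"
    "nhat (n1+n2) S j C0 X t k = real (card {i\<in>{1..n1+n2}. lab i = k})"
  using assms Ssub unfolding hVr_def hVs_def nhat_def Vreg_def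
  by (auto intro!: arg_cong[where f=card] arg_cong[where f=real])

lemma det_part2: "(\<lambda>t. (ws_hat (n1+n2) S j C0 ws0 X t, wd_hat (n1+n2) S j C0 ws0 wd0 X t)) \<longlonglongrightarrow> (ws, wd)"
proof (cases "bL < aL")
  case True
  then have lab: "lab i = (if i \<le> n1 then 1 else 2)" for i unfolding lab_def c1_def c2_def by simp
  have ev: "eventually (\<lambda>t. hVr (n1+n2) S j C0 X t 1 = R1 \<and> hVs (n1+n2) S j C0 X t 1 = S1
       \<and> hVr (n1+n2) S j C0 X t 2 = R2 \<and> hVs (n1+n2) S j C0 X t 2 = S2
       \<and> nhat (n1+n2) S j C0 X t 1 = real n1 \<and> nhat (n1+n2) S j C0 X t 2 = real n2) sequentially"
    using detect
  proof eventually_elim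
    case (elim t)
    show ?case unfolding labsets[OF elim] lab ifs set_facts by simp
  qed
  have "(\<lambda>t. ws_hat (n1+n2) S j C0 ws0 X t) \<longlonglongrightarrow> ws \<and> (\<lambda>t. wd_hat (n1+n2) S j C0 ws0 wd0 X t) \<longlonglongrightarrow> wd"
  proof (rule PE[OF ev lim_R1 lim_R2])
    show "S1 \<subseteq> S" "S2 \<subseteq> S" unfolding S1_def S2_def by auto
    show "finite R1" "finite R2" "finite S1" "finite S2" by (rule finR)+
    show "card R1 > 0" "card S1 > 0" "card S2 > 0" using poss unfolding nr1_def ns1_def ns2_def by auto
    show "n1 = card R1 + card S1" "n2 = card R2 + card S2" using cardsN by auto
    show "(ws * real (card S1) + wd * real n2) * aL = wd * real (card R2) * bL + ws * sum x0 S1 + wd * sum x0 S2"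
      using Eq1 unfolding ns1_def nr2_def \<sigma>1_def \<sigma>2_def .
    show "(ws * real (card S2) + wd * real n1) * bL = wd * real (card R1) * aL + ws * sum x0 S2 + wd * sum x0 S1"
      using Eq2 unfolding ns2_def nr1_def \<sigma>1_def \<sigma>2_def .
    show "sum x0 S1 / real (card S1) \<noteq> sum x0 S2 / real (card S2)"
      using avg' unfolding ns1_def ns2_def \<sigma>1_def \<sigma>2_def .
    show "ws * ((real n1)\<^sup>2 + (real n2)\<^sup>2) + 2 * wd * real n1 * real n2 = 1" by (rule norm)
  qed auto
  then show ?thesis by (intro tendsto_Pair) auto
next
  case False
  then have lab: "lab i = (if i \<le> n1 then 2 else 1)" for i unfolding lab_def c1_def c2_def by simp
  have ev: "eventually (\<lambda>t. hVr (n1+n2) S j C0 X t 1 = R2 \<and> hVs (n1+n2) S j C0 X t 1 = S2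
       \<and> hVr (n1+n2) S j C0 X t 2 = R1 \<and> hVs (n1+n2) S j C0 X t 2 = S1
       \<and> nhat (n1+n2) S j C0 X t 1 = real n2 \<and> nhat (n1+n2) S j C0 X t 2 = real n1) sequentially"
    using detect
  proof eventually_elim
    case (elim t)
    show ?case unfolding labsets[OF elim] lab ifs set_facts by simp
  qed
  have "(\<lambda>t. ws_hat (n1+n2) S j C0 ws0 X t) \<longlonglongrightarrow> ws \<and> (\<lambda>t. wd_hat (n1+n2) S j C0 ws0 wd0 X t) \<longlonglongrightarrow> wd"
  proof (rule PE[OF ev lim_R2 lim_R1])
    show "S2 \<subseteq> S" "S1 \<subseteq> S" unfolding S1_def S2_def by auto
    show "finite R2" "finite R1" "finite S2" "finite S1" by (rule finR)+
    show "card R2 > 0" "card S2 > 0" "card S1 > 0" using poss unfolding nr2_def ns1_def ns2_def by auto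
    show "n2 = card R2 + card S2" "n1 = card R1 + card S1" using cardsN by auto
    show "(ws * real (card S2) + wd * real n1) * bL = wd * real (card R1) * aL + ws * sum x0 S2 + wd * sum x0 S1"
      using Eq2 unfolding ns2_def nr1_def \<sigma>1_def \<sigma>2_def .
    show "(ws * real (card S1) + wd * real n2) * aL = wd * real (card R2) * bL + ws * sum x0 S1 + wd * sum x0 S2"
      using Eq1 unfolding ns1_def nr2_def \<sigma>1_def \<sigma>2_def .
    show "sum x0 S2 / real (card S2) \<noteq> sum x0 S1 / real (card S1)"
      using avg' unfolding ns1_def ns2_def \<sigma>1_def \<sigma>2_def by metis
    show "ws * ((real n2)\<^sup>2 + (real n1)\<^sup>2) + 2 * wd * real n2 * real n1 = 1" using norm by (simp add: algebra_simps)
  qed auto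
  then show ?thesis by (intro tendsto_Pair) auto
qed

end


theorem theorem5:
  fixes M :: "'w measure"
    and I :: "nat \<Rightarrow> 'w \<Rightarrow> nat \<times> nat"
    and n1 n2 :: nat and S :: "nat set" and ws wd :: real
    and x0 :: "nat \<Rightarrow> real" and j :: "nat \<Rightarrow> nat"
    and C0 :: "nat \<Rightarrow> nat" and ws0 wd0 :: real
  defines "n \<equiv> n1 + n2"
  defines "X \<equiv> (\<lambda>\<omega> t. traj S (\<lambda>s. I s \<omega>) x0 t)"
  assumes "prob_space M"
    and "prob_space.indep_vars M (\<lambda>_. count_space UNIV) I UNIV"
    and "\<And>t a b. a \<in> {1..n} \<Longrightarrow> b \<in> {1..n} \<Longrightarrow>
           measure M {\<omega>\<in>space M. I t \<omega> = (a, b)} = wgt n1 ws wd a b"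
    and "S \<subseteq> {1..n}"
    and "card ({1..n1} - S) > 0" and "card ({n1+1..n} - S) > 0"
    and "card ({1..n1} \<inter> S) > 0" and "card ({n1+1..n} \<inter> S) > 0"
    and "ws > 0" and "wd > 0" and "ws \<noteq> wd"
    and "ws * (real n1 ^ 2 + real n2 ^ 2) + 2 * wd * real n1 * real n2 = 1"
    and "(\<Sum>i\<in>{1..n1} \<inter> S. x0 i) / real (card ({1..n1} \<inter> S))
         \<noteq> (\<Sum>i\<in>{n1+1..n} \<inter> S. x0 i) / real (card ({n1+1..n} \<inter> S))"
    and "\<And>i. i \<in> S \<Longrightarrow> j i \<in> {1..n} - S \<and> comm n1 (j i) = comm n1 i"
  shows "(AE \<omega> in M. \<exists>T. \<exists>\<pi>. \<pi> permutes {1::nat, 2} \<and>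
            (\<forall>i\<in>{1..n}. \<forall>t\<ge>T. Chat n S j C0 (X \<omega>) t i = \<pi> (comm n1 i)))
       \<and> (AE \<omega> in M. ((\<lambda>t. (ws_hat n S j C0 ws0 (X \<omega>) t, wd_hat n S j C0 ws0 wd0 (X \<omega>) t))
                        \<longlonglongrightarrow> (ws, wd)))"
proof -
  note Xd = X_def
  interpret gs n1 n2 S ws wd x0
    by (rule gs.intro) (rule assms(11), rule assms(12), rule assms(14))
  have dist': "\<And>t a b. a \<in> {1..n1+n2} \<Longrightarrow> b \<in> {1..n1+n2} \<Longrightarrow>
           measure M {\<omega>\<in>space M. I t \<omega> = (a, b)} = wgt n1 ws wd a b"
    using assms(5) unfolding n_def by blast
  interpret gsM n1 n2 S ws wd x0 M I
    apply (rule gsM.intro)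
      apply (rule gs.intro)
        apply (rule assms(11))
       apply (rule assms(12))
      apply (rule assms(14))
     apply (rule assms(3))
    apply (rule gsM_axioms.intro)
     apply (rule assms(4))
    apply (rule dist')
     apply assumption+
    done
  have ae1: "AE \<omega> in M. \<forall>t. I t \<omega> \<in> P" by (rule AE_inP)
  have ae2: "AE \<omega> in M. \<forall>i\<in>{1..n1+n2} - S. (\<lambda>t. Sm i t (\<lambda>s. I s \<omega>) / real t) \<longlonglongrightarrow> 0"
  proof (rule eventually_ball_finite)
    show "finite ({1..n1+n2} - S)" by simp
    show "\<forall>i\<in>{1..n1+n2} - S. AE \<omega> in M. (\<lambda>t. Sm i t (\<lambda>s. I s \<omega>) / real t) \<longlonglongrightarrow> 0"
    proof
      fix i assume "i \<in> {1..n1+n2} - S"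
      then show "AE \<omega> in M. (\<lambda>t. Sm i t (\<lambda>s. I s \<omega>) / real t) \<longlonglongrightarrow> 0" by (intro slln) auto
    qed
  qed
  have main: "(\<exists>T. \<exists>\<pi>. \<pi> permutes {1::nat, 2} \<and>
            (\<forall>i\<in>{1..n}. \<forall>t\<ge>T. Chat n S j C0 (X \<omega>) t i = \<pi> (comm n1 i)))
       \<and> ((\<lambda>t. (ws_hat n S j C0 ws0 (X \<omega>) t, wd_hat n S j C0 ws0 wd0 (X \<omega>) t)) \<longlonglongrightarrow> (ws, wd))"
    if h1: "\<forall>t. I t \<omega> \<in> P" and h2: "\<forall>i\<in>{1..n1+n2} - S. (\<lambda>t. Sm i t (\<lambda>s. I s \<omega>) / real t) \<longlonglongrightarrow> 0"
    for \<omega>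
  proof -
    interpret gdet2 n1 n2 S ws wd x0 "\<lambda>s. I s \<omega>" j C0 ws0 wd0
    proof unfold_locales
      show "\<And>t. I t \<omega> \<in> P" using h1 by blast
      show "\<And>i. i \<notin> S \<Longrightarrow> i \<in> {1..n1+n2} \<Longrightarrow> (\<lambda>t. Sm i t (\<lambda>s. I s \<omega>) / real t) \<longlonglongrightarrow> 0"
        using h2 by blast
      show "S \<subseteq> {1..n1+n2}" using assms(6) unfolding n_def .
      show "card ({1..n1} - S) > 0" using assms(7) .
      show "card ({n1+1..n1+n2} - S) > 0" using assms(8) unfolding n_def .
      show "card ({1..n1} \<inter> S) > 0" using assms(9) .
      show "card ({n1+1..n1+n2} \<inter> S) > 0" using assms(10) unfolding n_def .
      show "ws \<noteq> wd" using assms(13) .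
      show "(\<Sum>i\<in>{1..n1} \<inter> S. x0 i) / real (card ({1..n1} \<inter> S))
         \<noteq> (\<Sum>i\<in>{n1+1..n1+n2} \<inter> S. x0 i) / real (card ({n1+1..n1+n2} \<inter> S))"
        using assms(15) unfolding n_def .
      show "\<And>i. i \<in> S \<Longrightarrow> j i \<in> {1..n1+n2} - S \<and> comm n1 (j i) = comm n1 i"
        using assms(16) unfolding n_def .
    qed
    have XX: "X \<omega> = gdet.X S x0 (\<lambda>s. I s \<omega>)" by (simp add: Xd X_def)
    show ?thesis unfolding XX n_def by (intro conjI det_part1 det_part2)
  qed
  have "AE \<omega> in M. (\<exists>T. \<exists>\<pi>. \<pi> permutes {1::nat, 2} \<and>
            (\<forall>i\<in>{1..n}. \<forall>t\<ge>T. Chat n S j C0 (X \<omega>) t i = \<pi> (comm n1 i)))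
       \<and> ((\<lambda>t. (ws_hat n S j C0 ws0 (X \<omega>) t, wd_hat n S j C0 ws0 wd0 (X \<omega>) t)) \<longlonglongrightarrow> (ws, wd))"
    using ae1 ae2 by eventually_elim (rule main)
  then show ?thesis by (simp only: eventually_conj_iff)
qed


end
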